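(* Let $d_{\ell-1},d_\ell,d_{\ell+1}\ge 2$ and let $r_\ell\ge 2$ be an integer with $$r_\ell\ \ge\ 2\left\lceil\frac{2d_\ell-\min(d_\ell,d_{\ell+1})}{2\min(d_\ell,d_{\ell-1})-2}\right\rceil.$$ Then the two-layer hPNN architecture $((d_{\ell-1},d_\ell,d_{\ell+1}),(r_\ell))$ is identifiable.
   Context: Work over $\mathbb R$. $\rho_r(z_1,\dots,z_d)=(z_1^r,\dots,z_d^r)$. A two-layer hPNN with architecture $((d_0,d_1,d_2),(r_1))$ and weights $(W_1,W_2)$, $W_1\in\mathbb R^{d_1\times d_0}$, $W_2\in\mathbb R^{d_2\times d_1}$, is the map $\mathbf x\mapsto W_2\rho_{r_1}(W_1\mathbf x)$. Weights $(W_1',W_2')$ are equivalent to $(W_1,W_2)$ if $W_1'=PDW_1$ and $W_2'=W_2D^{-r_1}P^T$ for some permutation matrix $P$ and invertible diagonal matrix $D$. The representation is unique if every weight pair of the same architecture defining the same function is equivalent to it. The architecture is identifiable if the representation is unique for all weights outside a Lebesgue-null subset of the parameter space. *)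

theory Defs
  imports "HOL-Analysis.Analysis"
begin

definition rho :: "nat \<Rightarrow> real ^ 'n \<Rightarrow> real ^ 'n" where
  "rho r z = (\<chi> i. (z $ i) ^ r)"

definition hpnn2 :: "real ^ 'd0 ^ 'd1 \<Rightarrow> real ^ 'd1 ^ 'd2 \<Rightarrow> nat \<Rightarrow> real ^ 'd0 \<Rightarrow> real ^ 'd2" where
  "hpnn2 W1 W2 r x = W2 *v rho r (W1 *v x)"

definition is_perm_matrix :: "real ^ 'n ^ 'n \<Rightarrow> bool" where
  "is_perm_matrix P \<longleftrightarrow> (\<exists>\<sigma>. \<sigma> permutes (UNIV :: 'n set) \<and>
      P = (\<chi> i j. if j = \<sigma> i then 1 else 0))"

definition is_diag_matrix :: "real ^ 'n ^ 'n \<Rightarrow> bool" where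
  "is_diag_matrix D \<longleftrightarrow> (\<forall>i j. i \<noteq> j \<longrightarrow> D $ i $ j = 0)"

primrec matpow :: "real ^ 'n ^ 'n \<Rightarrow> nat \<Rightarrow> real ^ 'n ^ 'n" where
  "matpow A 0 = mat 1"
| "matpow A (Suc k) = A ** matpow A k"

definition hpnn2_equiv :: "nat \<Rightarrow> real ^ 'd0 ^ 'd1 \<Rightarrow> real ^ 'd1 ^ 'd2 \<Rightarrow>
    real ^ 'd0 ^ 'd1 \<Rightarrow> real ^ 'd1 ^ 'd2 \<Rightarrow> bool" where
  "hpnn2_equiv r W1' W2' W1 W2 \<longleftrightarrow>
     (\<exists>P D. is_perm_matrix P \<and> is_diag_matrix D \<and> invertible D \<and>
        W1' = P ** D ** W1 \<and> W2' = W2 ** matpow (matrix_inv D) r ** transpose P)"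

definition hpnn2_unique :: "nat \<Rightarrow> real ^ 'd0 ^ 'd1 \<Rightarrow> real ^ 'd1 ^ 'd2 \<Rightarrow> bool" where
  "hpnn2_unique r W1 W2 \<longleftrightarrow>
     (\<forall>W1' W2'. hpnn2 W1' W2' r = hpnn2 W1 W2 r \<longrightarrow> hpnn2_equiv r W1' W2' W1 W2)"

text \<open>Identifiability of architecture ((d0,d1,d2),(r)); dimensions are the cardinalities of the index types.\<close>
definition hpnn2_identifiable :: "('d0::finite) itself \<Rightarrow> ('d1::finite) itself \<Rightarrow> ('d2::finite) itself \<Rightarrow> nat \<Rightarrow> bool" where
  "hpnn2_identifiable _ _ _ r \<longleftrightarrow>
     (\<exists>N :: ((real ^ 'd0 ^ 'd1) \<times> (real ^ 'd1 ^ 'd2)) set. N \<in> null_sets lebesgue \<and>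
        (\<forall>W1 W2. (W1, W2) \<notin> N \<longrightarrow> hpnn2_unique r W1 W2))"

end

theory Submission
  imports Defs "HOL-Library.Function_Algebras" "HOL-Computational_Algebra.Polynomial"
begin

definition kr :: "nat \<Rightarrow> ('r \<Rightarrow> 'a::real_vector) \<Rightarrow> bool" where
  "kr K v \<longleftrightarrow> (\<forall>S c. finite S \<longrightarrow> card S \<le> K \<longrightarrow> (\<Sum>r\<in>S. c r *\<^sub>R v r) = 0 \<longrightarrow> (\<forall>r\<in>S. c r = 0))"

lemma kr_mono: "kr K v \<Longrightarrow> K' \<le> K \<Longrightarrow> kr K' v"
  unfolding kr_def by force

lemma kr_D: "kr K v \<Longrightarrow> finite S \<Longrightarrow> card S \<le> K \<Longrightarrow> (\<Sum>r\<in>S. c r *\<^sub>R v r) = 0 \<Longrightarrow> r \<in> S \<Longrightarrow> c r = 0"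
  unfolding kr_def by blast

lemma span_image_sum:
  fixes v :: "'r \<Rightarrow> 'a::real_vector"
  assumes "finite U"
  shows "span (v ` U) = {y. \<exists>c. y = (\<Sum>r\<in>U. c r *\<^sub>R v r)}"
proof
  show "span (v ` U) \<subseteq> {y. \<exists>c. y = (\<Sum>r\<in>U. c r *\<^sub>R v r)}"
  proof (rule span_minimal)
    show "v ` U \<subseteq> {y. \<exists>c. y = (\<Sum>r\<in>U. c r *\<^sub>R v r)}"
    proof
      fix y assume "y \<in> v ` U"
      then obtain s where s: "s \<in> U" "y = v s" by auto
      have "y = (\<Sum>r\<in>U. (if r = s then 1 else 0) *\<^sub>R v r)"
        using s assms by (subst sum.cong[OF refl, of _ _ "\<lambda>r. if r = s then v r else 0"]) (auto simp: sum.delta)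
      then show "y \<in> {y. \<exists>c. y = (\<Sum>r\<in>U. c r *\<^sub>R v r)}" by (intro CollectI exI[of _ "\<lambda>r. if r = s then 1 else 0"])
    qed
    show "subspace {y. \<exists>c. y = (\<Sum>r\<in>U. c r *\<^sub>R v r)}"
      unfolding subspace_def
    proof (intro conjI ballI allI)
      show "0 \<in> {y. \<exists>c. y = (\<Sum>r\<in>U. c r *\<^sub>R v r)}"
        by (rule CollectI[of _ 0], rule exI[of _ "\<lambda>_. 0"], simp)
      fix x y assume "x \<in> {y. \<exists>c. y = (\<Sum>r\<in>U. c r *\<^sub>R v r)}" "y \<in> {y. \<exists>c. y = (\<Sum>r\<in>U. c r *\<^sub>R v r)}"
      then obtain c1 c2 where "x = (\<Sum>r\<in>U. c1 r *\<^sub>R v r)" "y = (\<Sum>r\<in>U. c2 r *\<^sub>R v r)" by auto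
      then have "x + y = (\<Sum>r\<in>U. (c1 r + c2 r) *\<^sub>R v r)"
        by (simp add: scaleR_add_left sum.distrib)
      then show "x + y \<in> {y. \<exists>c. y = (\<Sum>r\<in>U. c r *\<^sub>R v r)}" by (intro CollectI exI[of _ "\<lambda>r. c1 r + c2 r"])
    next
      fix t x assume "x \<in> {y. \<exists>c. y = (\<Sum>r\<in>U. c r *\<^sub>R v r)}"
      then obtain c1 where "x = (\<Sum>r\<in>U. c1 r *\<^sub>R v r)" by auto
      then have "t *\<^sub>R x = (\<Sum>r\<in>U. (t * c1 r) *\<^sub>R v r)"
        by (simp add: scaleR_sum_right)
      then show "t *\<^sub>R x \<in> {y. \<exists>c. y = (\<Sum>r\<in>U. c r *\<^sub>R v r)}" by (intro CollectI exI[of _ "\<lambda>r. t * c1 r"])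
    qed
  qed
next
  show "{y. \<exists>c. y = (\<Sum>r\<in>U. c r *\<^sub>R v r)} \<subseteq> span (v ` U)"
  proof safe
    fix c show "(\<Sum>r\<in>U. c r *\<^sub>R v r) \<in> span (v ` U)"
      by (rule span_sum) (auto intro: span_scale span_base)
  qed
qed

lemma kr_not_in_span:
  assumes "kr K v" "finite U" "card U < K" "t \<notin> U"
  shows "v t \<notin> span (v ` U)"
proof
  assume "v t \<in> span (v ` U)"
  then obtain c where c: "v t = (\<Sum>r\<in>U. c r *\<^sub>R v r)"
    using span_image_sum[OF assms(2)] by auto
  define c' where "c' = (\<lambda>r. if r = t then -1 else c r)"
  have "(\<Sum>r\<in>insert t U. c' r *\<^sub>R v r) = - v t + (\<Sum>r\<in>U. c r *\<^sub>R v r)"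
    using assms(2,4) by (simp add: c'_def) (rule sum.cong, auto)
  also have "\<dots> = 0" using c by simp
  finally have "c' t = 0"
    using kr_D[OF assms(1), of "insert t U" c' t] assms by simp
  then show False by (simp add: c'_def)
qed

lemma kr_dim:
  fixes v :: "'r \<Rightarrow> 'a::euclidean_space"
  assumes "kr K v" "finite U" "card U \<le> K"
  shows "dim (v ` U) = card U"
  using assms(2,3)
proof (induction U rule: finite_induct)
  case empty
  then show ?case by (metis card.empty dim_empty image_empty)
next
  case (insert t U)
  have "v t \<notin> span (v ` U)"
    using kr_not_in_span[OF assms(1) insert(1) _ insert(2)] insert(1,2,4) by simp
  then show ?case using insert by (simp add: dim_insert)
qed

lemma kr_nonzero:
  assumes "kr K v" "1 \<le> K"
  shows "v r \<noteq> 0"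
  using kr_D[OF assms(1), of "{r}" "\<lambda>_. 1" r] assms(2) by auto

lemma kr_pair:
  assumes "kr K v" "2 \<le> K" "s \<noteq> t" "x *\<^sub>R v s + y *\<^sub>R v t = 0"
  shows "x = 0 \<and> y = 0"
proof -
  have "(\<Sum>r\<in>{s,t}. (if r = s then x else y) *\<^sub>R v r) = 0"
    using assms(3,4) by simp
  moreover have "card {s,t} = 2" using assms(3) by simp
  ultimately show ?thesis
    using kr_D[OF assms(1), of "{s,t}" "\<lambda>r. if r = s then x else y" s]
      kr_D[OF assms(1), of "{s,t}" "\<lambda>r. if r = s then x else y" t] assms(2,3)
    by auto
qed


definition csub :: "'r set \<Rightarrow> (real^'r) set" where
  "csub S = {u. \<forall>r. r \<notin> S \<longrightarrow> u $ r = 0}"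

lemma subspace_csub: "subspace (csub S)"
  unfolding subspace_def csub_def by auto

lemma dim_csub: "dim (csub (S::'r::finite set)) = card S"
proof -
  let ?d = "(\<lambda>r. axis r (1::real)) ` S"
  have "?d \<subseteq> Basis" by (auto simp: Basis_vec_def)
  have eq: "csub S = {x. \<forall>i\<in>Basis. i \<notin> ?d \<longrightarrow> x \<bullet> i = 0}"
  proof (intro set_eqI iffI)
    fix x assume "x \<in> csub S"
    then show "x \<in> {x. \<forall>i\<in>Basis. i \<notin> ?d \<longrightarrow> x \<bullet> i = 0}"
      by (auto simp: csub_def inner_axis dest!: axis_inverse)
  next
    fix x assume x: "x \<in> {x. \<forall>i\<in>Basis. i \<notin> ?d \<longrightarrow> x \<bullet> i = 0}"
    show "x \<in> csub S"
      unfolding csub_def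
    proof (intro CollectI allI impI)
      fix r assume "r \<notin> S"
      then have "axis r (1::real) \<notin> ?d" by (auto simp: axis_eq_axis)
      moreover have "axis r (1::real) \<in> Basis" by (auto simp: Basis_vec_def)
      ultimately have "x \<bullet> axis r 1 = 0" using x by auto
      then show "x $ r = 0" by (simp add: inner_axis)
    qed
  qed
  have "inj_on (\<lambda>r. axis r (1::real)) S" by (auto simp: inj_on_def axis_eq_axis)
  then have "card ?d = card S" by (rule card_image)
  then show ?thesis using eq dim_substandard[OF \<open>?d \<subseteq> Basis\<close>] by simp
qed

lemma rank_upper:
  fixes a :: "'r::finite \<Rightarrow> 'a::euclidean_space" and b :: "'r \<Rightarrow> 'b::euclidean_space"
  shows "dim (range (\<lambda>v. \<Sum>r\<in>UNIV. (g r * (b r \<bullet> v)) *\<^sub>R a r)) \<le> card {r. g r \<noteq> 0}"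
proof -
  let ?G = "{r. g r \<noteq> 0}"
  have "range (\<lambda>v. \<Sum>r\<in>UNIV. (g r * (b r \<bullet> v)) *\<^sub>R a r) \<subseteq> span (a ` ?G)"
  proof safe
    fix v
    have "(\<Sum>r\<in>UNIV. (g r * (b r \<bullet> v)) *\<^sub>R a r) = (\<Sum>r\<in>?G. (g r * (b r \<bullet> v)) *\<^sub>R a r)"
      by (rule sum.mono_neutral_right) auto
    also have "\<dots> \<in> span (a ` ?G)"
      by (rule span_sum) (auto intro: span_scale span_base)
    finally show "(\<Sum>r\<in>UNIV. (g r * (b r \<bullet> v)) *\<^sub>R a r) \<in> span (a ` ?G)" .
  qed
  then have "dim (range (\<lambda>v. \<Sum>r\<in>UNIV. (g r * (b r \<bullet> v)) *\<^sub>R a r)) \<le> dim (span (a ` ?G))"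
    by (rule dim_subset)
  also have "\<dots> = dim (a ` ?G)" by simp
  also have "\<dots> \<le> card (a ` ?G)" by (rule dim_le_card') simp
  also have "\<dots> \<le> card ?G" by (rule card_image_le) simp
  finally show ?thesis .
qed

lemma rank_lower:
  fixes a :: "'r::finite \<Rightarrow> 'a::euclidean_space" and b :: "'r \<Rightarrow> 'b::euclidean_space"
  assumes KA: "kr KA a" and KB: "kr KB b"
  shows "min (card {r. g r \<noteq> 0}) KA + min (card {r. g r \<noteq> 0}) KB
           \<le> dim (range (\<lambda>v. \<Sum>r\<in>UNIV. (g r * (b r \<bullet> v)) *\<^sub>R a r)) + card {r. g r \<noteq> 0}"
proof -
  define S where "S = {r. g r \<noteq> 0}"
  define \<omega> where "\<omega> = card S"
  define \<rho> :: "'b \<Rightarrow> real^'r" where "\<rho> = (\<lambda>v. \<chi> r. g r * (b r \<bullet> v))"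
  define L :: "real^'r \<Rightarrow> 'a" where "L = (\<lambda>u. \<Sum>r\<in>UNIV. (u $ r) *\<^sub>R a r)"
  have lin\<rho>: "linear \<rho>"
    unfolding \<rho>_def by (rule linearI) (auto simp: vec_eq_iff inner_add_right algebra_simps)
  have linL: "linear L"
    unfolding L_def by (rule linearI) (auto simp: scaleR_add_left sum.distrib scaleR_sum_right)
  define Y where "Y = range \<rho>"
  have subY: "subspace Y" unfolding Y_def
    by (rule linear_subspace_image[OF lin\<rho> subspace_UNIV])
  have YS: "Y \<subseteq> csub S" by (auto simp: Y_def \<rho>_def csub_def S_def)
  have M: "range (\<lambda>v. \<Sum>r\<in>UNIV. (g r * (b r \<bullet> v)) *\<^sub>R a r) = L ` Y"
    by (auto simp: Y_def L_def \<rho>_def image_comp o_def)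
  obtain SB where SB: "SB \<subseteq> S" "card SB = min \<omega> KB" "finite SB"
    using obtain_subset_with_card_n[of "min \<omega> KB" S] by (auto simp: \<omega>_def)
  obtain SA where SA: "SA \<subseteq> S" "card SA = min \<omega> KA" "finite SA"
    using obtain_subset_with_card_n[of "min \<omega> KA" S] by (auto simp: \<omega>_def)
  define Yp where "Yp = {u \<in> UNIV. \<forall>y\<in>Y. orthogonal y u}"
  have dYp: "dim Yp + dim Y = CARD('r)"
    using dim_subspace_orthogonal_to_vectors[OF subY subspace_UNIV] by (simp add: Yp_def)
  have subYp: "subspace Yp" unfolding Yp_def
    by (auto simp: subspace_def orthogonal_clauses)
  have int1: "Yp \<inter> csub SB = {0}"
  proof safe
    fix u assume u: "u \<in> Yp" "u \<in> csub SB"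
    have z: "(\<Sum>r\<in>SB. (u $ r * g r) *\<^sub>R b r) = 0"
    proof -
      let ?z = "(\<Sum>r\<in>SB. (u $ r * g r) *\<^sub>R b r)"
      have "\<rho> ?z \<bullet> u = 0" using u(1) by (auto simp: Yp_def Y_def orthogonal_def)
      moreover have "\<rho> ?z \<bullet> u = (\<Sum>r\<in>UNIV. g r * (b r \<bullet> ?z) * u $ r)"
        by (simp add: \<rho>_def inner_vec_def)
      moreover have "(\<Sum>r\<in>UNIV. g r * (b r \<bullet> ?z) * u $ r) = (\<Sum>r\<in>SB. g r * (b r \<bullet> ?z) * u $ r)"
        by (rule sum.mono_neutral_right) (use u(2) in \<open>auto simp: csub_def\<close>)
      moreover have "(\<Sum>r\<in>SB. g r * (b r \<bullet> ?z) * u $ r) = ?z \<bullet> ?z"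
        by (simp add: inner_sum_left inner_commute algebra_simps)
      ultimately show ?thesis by simp
    qed
    show "u = 0"
    proof (rule vec_eq_iff[THEN iffD2], rule allI)
      fix r show "u $ r = 0 $ r"
      proof (cases "r \<in> SB")
        case True
        have "u $ r * g r = 0"
          using kr_D[OF KB SB(3), of "\<lambda>r. u $ r * g r" r] z True SB(2) by simp
        moreover have "g r \<noteq> 0" using True SB(1) by (auto simp: S_def)
        ultimately show ?thesis by simp
      next
        case False then show ?thesis using u(2) by (auto simp: csub_def)
      qed
    qed
  qed (auto simp: Yp_def csub_def orthogonal_clauses)
  have "dim {x + y |x y. x \<in> Yp \<and> y \<in> csub SB} + dim (Yp \<inter> csub SB) = dim Yp + dim (csub SB)"
    by (rule dim_sums_Int[OF subYp subspace_csub])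
  moreover have "dim {x + y |x y. x \<in> Yp \<and> y \<in> csub SB} \<le> CARD('r)"
    by (rule dim_subset_UNIV_cart)
  ultimately have B: "card SB \<le> dim Y"
    using int1 dYp dim_csub[of SB] by simp
  define Kk where "Kk = Y \<inter> {u. L u = 0}"
  have subKk: "subspace Kk" unfolding Kk_def
    by (intro subspace_inter subY linear_subspace_kernel linL)
  have int2: "Kk \<inter> csub SA = {0}"
  proof safe
    fix u assume u: "u \<in> Kk" "u \<in> csub SA"
    have "(\<Sum>r\<in>UNIV. (u $ r) *\<^sub>R a r) = (\<Sum>r\<in>SA. (u $ r) *\<^sub>R a r)"
      by (rule sum.mono_neutral_right) (use u(2) in \<open>auto simp: csub_def\<close>)
    then have z: "(\<Sum>r\<in>SA. (u $ r) *\<^sub>R a r) = 0" using u(1) by (simp add: Kk_def L_def)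
    show "u = 0"
    proof (rule vec_eq_iff[THEN iffD2], rule allI)
      fix r show "u $ r = 0 $ r"
      proof (cases "r \<in> SA")
        case True
        then show ?thesis
          using kr_D[OF KA SA(3), of "\<lambda>r. u $ r" r] z SA(2) by simp
      next
        case False then show ?thesis using u(2) by (auto simp: csub_def)
      qed
    qed
  qed (auto simp: Kk_def csub_def subspace_0[OF subY] linear_0[OF linL])
  have "dim {x + y |x y. x \<in> Kk \<and> y \<in> csub SA} + dim (Kk \<inter> csub SA) = dim Kk + dim (csub SA)"
    by (rule dim_sums_Int[OF subKk subspace_csub])
  moreover have "dim {x + y |x y. x \<in> Kk \<and> y \<in> csub SA} \<le> dim (csub S)"
  proof (rule dim_subset, safe)
    fix x y assume "x \<in> Kk" "y \<in> csub SA"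
    then show "x + y \<in> csub S" using YS SA(1) by (auto simp: Kk_def csub_def subset_iff)
  qed
  ultimately have A: "dim Kk + card SA \<le> \<omega>"
    using int2 dim_csub[of SA] dim_csub[of S] by (simp add: \<omega>_def)
  define Y' where "Y' = {y \<in> Y. \<forall>x\<in>Kk. orthogonal x y}"
  have "Kk \<subseteq> Y" by (auto simp: Kk_def)
  have dY': "dim Y' + dim Kk = dim Y"
    unfolding Y'_def by (rule dim_subspace_orthogonal_to_vectors[OF subKk subY \<open>Kk \<subseteq> Y\<close>])
  have subY': "subspace Y'" unfolding Y'_def
    using subY by (auto simp: subspace_def orthogonal_clauses)
  have injL: "inj_on L (span Y')"
  proof (rule inj_onI)
    fix x y assume xy: "x \<in> span Y'" "y \<in> span Y'" "L x = L y"
    have sY: "span Y' = Y'" using subY' span_eq_iff by blast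
    then have "x \<in> Y'" "y \<in> Y'" using xy(1,2) unfolding sY by auto
    then have d: "x - y \<in> Y'" using subY' by (simp add: subspace_diff)
    have "L (x - y) = 0" using xy(3) linear_diff[OF linL] by simp
    then have "x - y \<in> Kk" using d by (auto simp: Kk_def Y'_def)
    then have "orthogonal (x - y) (x - y)" using d by (auto simp: Y'_def)
    then show "x = y" by (simp add: orthogonal_def)
  qed
  have "dim (L ` Y') = dim Y'" by (rule dim_image_eq[OF linL injL])
  moreover have "dim (L ` Y') \<le> dim (L ` Y)"
    by (rule dim_subset) (auto simp: Y'_def)
  ultimately have C: "dim Y' \<le> dim (L ` Y)" by simp
  show ?thesis
    using A B C dY' SA(2) SB(2) M by (simp add: S_def \<omega>_def)
qed


lemma card_compl_split:
  fixes P :: "'r::finite \<Rightarrow> bool"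
  shows "card {r. P r} + card {r. \<not> P r} = CARD('r)"
proof -
  have "card ({r. P r} \<union> {r. \<not> P r}) = card {r. P r} + card {r. \<not> P r}"
    by (rule card_Un_disjoint) auto
  moreover have "{r. P r} \<union> {r. \<not> P r} = UNIV" by auto
  ultimately show ?thesis by simp
qed

lemma kruskal_hyp:
  fixes a ab :: "'r::finite \<Rightarrow> 'a::euclidean_space" and b bb :: "'r \<Rightarrow> 'b::euclidean_space"
    and c cb :: "'r \<Rightarrow> 'c::euclidean_space"
  assumes TI: "\<forall>u v w. (\<Sum>r\<in>UNIV. (a r \<bullet> u) * (b r \<bullet> v) * (c r \<bullet> w)) = (\<Sum>r\<in>UNIV. (ab r \<bullet> u) * (bb r \<bullet> v) * (cb r \<bullet> w))"
    and KA: "kr KA a" and KB: "kr KB b" and le: "KA \<le> CARD('r)" "KB \<le> CARD('r)"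
    and sum: "2 * CARD('r) + 2 \<le> KA + KB + KC"
    and z: "KC \<le> card {r. cb r \<bullet> x = 0} + 1"
  shows "card {r. cb r \<bullet> x = 0} \<le> card {r. c r \<bullet> x = 0}"
proof -
  define M where "M = (\<lambda>v. \<Sum>r\<in>UNIV. ((c r \<bullet> x) * (b r \<bullet> v)) *\<^sub>R a r)"
  define Mb where "Mb = (\<lambda>v. \<Sum>r\<in>UNIV. ((cb r \<bullet> x) * (bb r \<bullet> v)) *\<^sub>R ab r)"
  have "M = Mb"
  proof
    fix v
    show "M v = Mb v"
    proof (rule vector_eq_ldot[THEN iffD1], rule allI)
      fix u
      have "u \<bullet> M v = (\<Sum>r\<in>UNIV. (a r \<bullet> u) * (b r \<bullet> v) * (c r \<bullet> x))"
        by (simp add: M_def inner_sum_right inner_commute algebra_simps)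
      also have "\<dots> = (\<Sum>r\<in>UNIV. (ab r \<bullet> u) * (bb r \<bullet> v) * (cb r \<bullet> x))" using TI by blast
      also have "\<dots> = u \<bullet> Mb v"
        by (simp add: Mb_def inner_sum_right inner_commute algebra_simps)
      finally show "u \<bullet> M v = u \<bullet> Mb v" .
    qed
  qed
  have up: "dim (range M) \<le> card {r. cb r \<bullet> x \<noteq> 0}"
    unfolding \<open>M = Mb\<close> Mb_def by (rule rank_upper)
  have lo: "min (card {r. c r \<bullet> x \<noteq> 0}) KA + min (card {r. c r \<bullet> x \<noteq> 0}) KB
           \<le> dim (range M) + card {r. c r \<bullet> x \<noteq> 0}"
    unfolding M_def by (rule rank_lower[OF KA KB])
  have s1: "card {r. c r \<bullet> x = 0} + card {r. c r \<bullet> x \<noteq> 0} = CARD('r)"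
    using card_compl_split[of "\<lambda>r. c r \<bullet> x = 0"] by simp
  have s2: "card {r. cb r \<bullet> x = 0} + card {r. cb r \<bullet> x \<noteq> 0} = CARD('r)"
    using card_compl_split[of "\<lambda>r. cb r \<bullet> x = 0"] by simp
  show ?thesis
    using up lo s1 s2 le sum z by (simp add: min_def split: if_splits)
qed


lemma flat_eq:
  fixes F G :: "'a::euclidean_space set"
  assumes "subspace F" "subspace G" "F \<subseteq> G" "dim G = dim F + 1" "v \<in> G" "v \<notin> F"
  shows "span (insert v F) = G"
proof (rule subspace_dim_equal)
  show "subspace (span (insert v F))" by simp
  show "subspace G" by fact
  show "span (insert v F) \<subseteq> G" using assms by (simp add: span_minimal)
  have spF: "span F = F" using assms(1) span_eq_iff by blast
  have "v \<notin> span F" unfolding spF using assms(6) .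
  then have "dim (insert v F) = dim F + 1" by (simp add: dim_insert)
  then show "dim G \<le> dim (span (insert v F))" using assms(4) by simp
qed

lemma span_insert_span: "span (insert a (span S)) = span (insert a S)"
proof (rule antisym)
  have "span S \<subseteq> span (insert a S)" by (rule span_mono) auto
  then show "span (insert a (span S)) \<subseteq> span (insert a S)"
    by (intro span_minimal) (auto intro: span_base)
  show "span (insert a S) \<subseteq> span (insert a (span S))"
    by (rule span_mono) (auto intro: span_base)
qed

lemma count_arith:
  fixes SA SB X Y R m :: nat
  assumes "SA + X = R" "SB + Y \<le> R" "SA + m * X \<le> SB + m * Y" "2 \<le> m"
  shows "X \<le> Y"
proof (rule ccontr)
  assume "\<not> X \<le> Y"
  then obtain t where t: "X = Y + t" "1 \<le> t" by (metis le_add_diff_inverse less_imp_le_nat not_le less_one not_less_iff_gr_or_eq add_diff_cancel_left' linorder_not_less zero_less_diff)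
  have "m * X = m * Y + m * t" using t by (simp add: algebra_simps)
  moreover have "2 * t \<le> m * t" using assms(4) by simp
  ultimately show False using assms t by linarith
qed

lemma perm_lemma:
  fixes c cb :: "'r::finite \<Rightarrow> 'c::euclidean_space"
  assumes kr: "kr K c" and K2: "2 \<le> K" and KR: "K \<le> CARD('r)"
    and H: "\<And>x. K \<le> card {r. cb r \<bullet> x = 0} + 1 \<Longrightarrow> card {r. cb r \<bullet> x = 0} \<le> card {r. c r \<bullet> x = 0}"
  shows "\<exists>\<pi>. bij \<pi> \<and> (\<forall>r. \<exists>l. l \<noteq> 0 \<and> cb r = l *\<^sub>R c (\<pi> r))"
proof -
  define V where "V = span (range cb)"
  define n where "n = dim V"
  define Nf where "Nf = (\<lambda>F. card {r. c r \<in> F})"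
  define Nbf where "Nbf = (\<lambda>F. card {r. cb r \<in> F})"
  have subV: "subspace V" by (simp add: V_def)
  have cV: "c r \<in> V" for r
  proof (rule ccontr)
    assume nV: "c r \<notin> V"
    obtain y z where yz: "y \<in> span (range cb)" "\<And>w. w \<in> span (range cb) \<Longrightarrow> orthogonal z w" "c r = y + z"
      using orthogonal_subspace_decomp_exists[of "range cb" "c r"] by blast
    have "z \<noteq> 0" using nV yz by (auto simp: V_def)
    have cb0: "cb s \<bullet> z = 0" for s
      using yz(2)[of "cb s"] by (auto simp: orthogonal_def inner_commute intro: span_base)
    then have "{s. cb s \<bullet> z = 0} = UNIV" by auto
    then have "card {s. cb s \<bullet> z = 0} = CARD('r)" by simp
    then have "CARD('r) \<le> card {s. c s \<bullet> z = 0}" using H[of z] KR by simp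
    then have "{s. c s \<bullet> z = 0} = UNIV"
      using card_seteq[of UNIV "{s. c s \<bullet> z = 0}"] by simp
    then have "c r \<bullet> z = 0" by auto
    moreover have "c r \<bullet> z = z \<bullet> z"
    proof -
      have "z \<bullet> y = 0" using yz(2)[OF yz(1)] by (simp add: orthogonal_def)
      then have "y \<bullet> z = 0" by (simp add: inner_commute)
      then show ?thesis by (simp add: yz(3) inner_add_left)
    qed
    ultimately show False using \<open>z \<noteq> 0\<close> by simp
  qed
  have nK: "K \<le> n"
  proof -
    obtain S :: "'r set" where S: "card S = K" "finite S"
      using obtain_subset_with_card_n[of K "UNIV::'r set"] KR by (metis finite_code)
    have "dim (c ` S) = K" using kr_dim[OF kr S(2)] S by simp
    moreover have "dim (c ` S) \<le> n" unfolding n_def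
      by (rule dim_subset) (use cV in auto)
    ultimately show ?thesis by simp
  qed
  have dimV: "n = dim (range cb)" by (simp add: n_def V_def)
  have NfV: "Nf V = CARD('r)" using cV by (simp add: Nf_def)
  have main: "\<And>T. Nbf (span (cb ` T)) \<le> Nf (span (cb ` T))"
  proof -
    have "\<forall>T. n - dim (cb ` T) = d \<longrightarrow> Nbf (span (cb ` T)) \<le> Nf (span (cb ` T))" for d
    proof (induction d rule: less_induct)
      case (less d)
      show ?case
      proof (intro allI impI)
        fix T assume dT: "n - dim (cb ` T) = d"
        define F where "F = span (cb ` T)"
        define l where "l = dim F"
        have subF: "subspace F" by (simp add: F_def)
        have FV: "F \<subseteq> V" unfolding F_def V_def by (rule span_mono) auto
        have ln: "l \<le> n" unfolding l_def n_def by (rule dim_subset[OF FV])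
        have ld: "l = dim (cb ` T)" by (simp add: l_def F_def)
        have cardT: "l \<le> Nbf F"
        proof -
          have "finite (cb ` T)" by simp
          then have "l \<le> card (cb ` T)" using dim_le_card'[of "cb ` T"] ld by simp
          also have "\<dots> \<le> card T" by (rule card_image_le) simp
          also have "\<dots> \<le> Nbf F" unfolding Nbf_def F_def
            by (rule card_mono) (auto intro: span_base)
          finally show ?thesis .
        qed
        consider "l = n" | "l + 1 = n" | "l + 2 \<le> n" using ln by linarith
        then show "Nbf (span (cb ` T)) \<le> Nf (span (cb ` T))"
        proof cases
          case 1
          have "F = V" by (rule subspace_dim_equal[OF subF subV FV]) (use 1 in \<open>simp add: l_def n_def\<close>)
          then show ?thesis using NfV unfolding F_def[symmetric] by (simp add: Nbf_def card_mono)
        next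
          case 2
          have "\<exists>s. cb s \<notin> F"
          proof (rule ccontr)
            assume "\<not> (\<exists>s. cb s \<notin> F)"
            then have "range cb \<subseteq> F" by auto
            then have "V \<subseteq> F" unfolding V_def using span_minimal subF by blast
            then have "n \<le> l" unfolding n_def l_def by (rule dim_subset)
            then show False using 2 by simp
          qed
          then obtain s where s: "cb s \<notin> F" by blast
          obtain y z where yz: "y \<in> span F" "\<And>w. w \<in> span F \<Longrightarrow> orthogonal z w" "cb s = y + z"
            using orthogonal_subspace_decomp_exists[of F "cb s"] by blast
          have spF: "span F = F" using subF span_eq_iff by blast
          have "z \<noteq> 0" using s yz(1,3) unfolding spF by auto
          have zV: "z \<in> V"
          proof -
            have "cb s \<in> V" by (simp add: V_def span_base)
            moreover have "y \<in> V" using yz(1) spF FV by auto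
            moreover have "z = cb s - y" using yz(3) by simp
            ultimately show ?thesis using subspace_diff[OF subV] by simp
          qed
          have zF: "z \<notin> F"
          proof
            assume "z \<in> F" then have "orthogonal z z" using yz(2) spF by auto
            then show False using \<open>z \<noteq> 0\<close> by (simp add: orthogonal_def)
          qed
          have span_eq: "span (insert z F) = V"
          proof (rule subspace_dim_equal)
            show "span (insert z F) \<subseteq> V" using zV FV subV by (simp add: span_minimal)
            have "z \<notin> span F" unfolding spF using zF .
            then have "dim (insert z F) = l + 1" by (simp add: dim_insert l_def)
            then show "dim V \<le> dim (span (insert z F))" using 2 by (simp add: n_def)
          qed (simp_all add: subV)
          have key: "v \<bullet> z = 0 \<longleftrightarrow> v \<in> F" if "v \<in> V" for v
          proof
            assume "v \<in> F" then show "v \<bullet> z = 0"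
              using yz(2)[of v] spF by (simp add: orthogonal_def inner_commute)
          next
            assume vz: "v \<bullet> z = 0"
            have "v \<in> span (insert z F)" using that span_eq by simp
            then obtain k where k: "v - k *\<^sub>R z \<in> span F" by (auto simp: span_insert)
            have "(v - k *\<^sub>R z) \<bullet> z = 0" using yz(2)[OF k] by (simp add: orthogonal_def inner_commute)
            then have "k * (z \<bullet> z) = 0" using vz by (simp add: inner_diff_left)
            then have "k = 0" using \<open>z \<noteq> 0\<close> by simp
            then show "v \<in> F" using k unfolding spF by simp
          qed
          have e1: "{r. cb r \<bullet> z = 0} = {r. cb r \<in> F}"
            using key by (auto simp: V_def span_base)
          have e2: "{r. c r \<bullet> z = 0} = {r. c r \<in> F}"
            using key cV by auto
          have "K \<le> card {r. cb r \<bullet> z = 0} + 1"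
            using e1 cardT nK 2 by (simp add: Nbf_def)
          then have "card {r. cb r \<bullet> z = 0} \<le> card {r. c r \<bullet> z = 0}" by (rule H)
          then show ?thesis using e1 e2 by (simp add: Nbf_def Nf_def F_def)
        next
          case 3
          define Ob where "Ob = {r. cb r \<notin> F}"
          define G where "G = (\<lambda>r. span (cb ` insert r T))"
          have G_alt: "G r = span (insert (cb r) F)" for r
            unfolding G_def F_def by (simp add: span_insert_span image_insert)
          have Gdim: "dim (G r) = l + 1" if "r \<in> Ob" for r
          proof -
            have "cb r \<notin> span (cb ` T)" using that by (simp add: Ob_def F_def)
            then show ?thesis by (simp add: G_def ld dim_insert)
          qed
          have FG: "F \<subseteq> G r" for r unfolding G_alt using span_superset[of "insert (cb r) F"] by auto
          have subG: "subspace (G r)" for r by (simp add: G_def)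
          have cbG: "cb r \<in> G r" for r unfolding G_alt by (simp add: span_base)
          have GV: "G r \<subseteq> V" for r unfolding G_def V_def by (rule span_mono) auto
          have same: "G r1 = G r2" if "r1 \<in> Ob" "r2 \<in> Ob" "v \<in> G r1" "v \<in> G r2" "v \<notin> F" for r1 r2 v
          proof -
            have "span (insert v F) = G r1"
              by (rule flat_eq[OF subF subG FG]) (use Gdim[OF that(1)] that in \<open>simp_all add: l_def\<close>)
            moreover have "span (insert v F) = G r2"
              by (rule flat_eq[OF subF subG FG]) (use Gdim[OF that(2)] that in \<open>simp_all add: l_def\<close>)
            ultimately show ?thesis by simp
          qed
          define GG where "GG = G ` Ob"
          define m where "m = card GG"
          have finGG: "finite GG" by (simp add: GG_def)
          have IH: "Nbf H \<le> Nf H" if HG: "H \<in> GG" for H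
          proof -
            obtain r where r: "r \<in> Ob" "H = G r" using HG unfolding GG_def by blast
            have "dim (cb ` insert r T) = l + 1" using Gdim[OF r(1)] by (simp add: G_def)
            then have "n - dim (cb ` insert r T) < d" using dT 3 ld by simp
            then have "Nbf (span (cb ` insert r T)) \<le> Nf (span (cb ` insert r T))"
              using less.IH by blast
            then show ?thesis using r by (simp add: G_def)
          qed
          define A where "A = (\<lambda>H. {r. cb r \<in> H} - {r. cb r \<in> F})"
          define B where "B = (\<lambda>H. {r. c r \<in> H} - {r. c r \<in> F})"
          have FH: "F \<subseteq> H" if "H \<in> GG" for H using that FG by (auto simp: GG_def)
          have cardA: "card (A H) + Nbf F = Nbf H" if "H \<in> GG" for H
          proof -
            have sub: "{r. cb r \<in> F} \<subseteq> {r. cb r \<in> H}" using FH[OF that] by auto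
            have "card (A H) = card {r. cb r \<in> H} - card {r. cb r \<in> F}"
              unfolding A_def by (rule card_Diff_subset) (use sub in auto)
            moreover have "card {r. cb r \<in> F} \<le> card {r. cb r \<in> H}" by (rule card_mono[OF _ sub]) simp
            ultimately show ?thesis by (simp add: Nbf_def)
          qed
          have cardB: "card (B H) + Nf F = Nf H" if "H \<in> GG" for H
          proof -
            have sub: "{r. c r \<in> F} \<subseteq> {r. c r \<in> H}" using FH[OF that] by auto
            have "card (B H) = card {r. c r \<in> H} - card {r. c r \<in> F}"
              unfolding B_def by (rule card_Diff_subset) (use sub in auto)
            moreover have "card {r. c r \<in> F} \<le> card {r. c r \<in> H}" by (rule card_mono[OF _ sub]) simp
            ultimately show ?thesis by (simp add: Nf_def)
          qed
          have UA: "(\<Union>H\<in>GG. A H) = Ob"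
          proof
            show "(\<Union>H\<in>GG. A H) \<subseteq> Ob" by (auto simp: A_def Ob_def)
            show "Ob \<subseteq> (\<Union>H\<in>GG. A H)"
            proof
              fix r assume "r \<in> Ob"
              then have "r \<in> A (G r)" "G r \<in> GG" using cbG by (auto simp: A_def Ob_def GG_def)
              then show "r \<in> (\<Union>H\<in>GG. A H)" by blast
            qed
          qed
          have disjA: "\<forall>H1\<in>GG. \<forall>H2\<in>GG. H1 \<noteq> H2 \<longrightarrow> A H1 \<inter> A H2 = {}"
          proof (intro ballI impI)
            fix H1 H2 assume H: "H1 \<in> GG" "H2 \<in> GG" "H1 \<noteq> H2"
            obtain r1 r2 where r: "r1 \<in> Ob" "H1 = G r1" "r2 \<in> Ob" "H2 = G r2" using H unfolding GG_def by blast
            show "A H1 \<inter> A H2 = {}"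
            proof (rule ccontr)
              assume "A H1 \<inter> A H2 \<noteq> {}"
              then obtain s where "cb s \<in> G r1" "cb s \<in> G r2" "cb s \<notin> F" using r by (auto simp: A_def)
              then have "G r1 = G r2" using same[OF r(1) r(3)] by blast
              then show False using H r by simp
            qed
          qed
          have disjB: "\<forall>H1\<in>GG. \<forall>H2\<in>GG. H1 \<noteq> H2 \<longrightarrow> B H1 \<inter> B H2 = {}"
          proof (intro ballI impI)
            fix H1 H2 assume H: "H1 \<in> GG" "H2 \<in> GG" "H1 \<noteq> H2"
            obtain r1 r2 where r: "r1 \<in> Ob" "H1 = G r1" "r2 \<in> Ob" "H2 = G r2" using H unfolding GG_def by blast
            show "B H1 \<inter> B H2 = {}"
            proof (rule ccontr)
              assume "B H1 \<inter> B H2 \<noteq> {}"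
              then obtain s where "c s \<in> G r1" "c s \<in> G r2" "c s \<notin> F" using r by (auto simp: B_def)
              then have "G r1 = G r2" using same[OF r(1) r(3)] by blast
              then show False using H r by simp
            qed
          qed
          have SA: "card Ob = (\<Sum>H\<in>GG. card (A H))"
            unfolding UA[symmetric] by (rule card_UN_disjoint[OF finGG _ disjA]) simp
          have "(\<Sum>H\<in>GG. card (B H)) = card (\<Union>H\<in>GG. B H)"
            by (rule card_UN_disjoint[OF finGG _ disjB, symmetric]) simp
          also have "\<dots> \<le> card {r. c r \<notin> F}" by (rule card_mono) (auto simp: B_def)
          finally have SB: "(\<Sum>H\<in>GG. card (B H)) \<le> card {r. c r \<notin> F}" .
          have c1: "card Ob + Nbf F = CARD('r)"
            using card_compl_split[of "\<lambda>r. cb r \<in> F"] by (simp add: Ob_def Nbf_def add.commute)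
          have c2: "Nf F + card {r. c r \<notin> F} = CARD('r)"
            using card_compl_split[of "\<lambda>r. c r \<in> F"] by (simp add: Nf_def)
          have "(\<Sum>H\<in>GG. Nbf H) \<le> (\<Sum>H\<in>GG. Nf H)" by (rule sum_mono) (rule IH)
          moreover have "(\<Sum>H\<in>GG. Nbf H) = (\<Sum>H\<in>GG. card (A H)) + m * Nbf F"
          proof -
            have "(\<Sum>H\<in>GG. Nbf H) = (\<Sum>H\<in>GG. card (A H) + Nbf F)" by (rule sum.cong) (use cardA in auto)
            also have "\<dots> = (\<Sum>H\<in>GG. card (A H)) + m * Nbf F" by (simp add: sum.distrib m_def)
            finally show ?thesis .
          qed
          moreover have "(\<Sum>H\<in>GG. Nf H) = (\<Sum>H\<in>GG. card (B H)) + m * Nf F"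
          proof -
            have "(\<Sum>H\<in>GG. Nf H) = (\<Sum>H\<in>GG. card (B H) + Nf F)" by (rule sum.cong) (use cardB in auto)
            also have "\<dots> = (\<Sum>H\<in>GG. card (B H)) + m * Nf F" by (simp add: sum.distrib m_def)
            finally show ?thesis .
          qed
          ultimately have ineq: "(\<Sum>H\<in>GG. card (A H)) + m * Nbf F \<le> (\<Sum>H\<in>GG. card (B H)) + m * Nf F"
            by simp
          have Obne: "Ob \<noteq> {}"
          proof
            assume "Ob = {}"
            then have "range cb \<subseteq> F" by (auto simp: Ob_def)
            then have "V \<subseteq> F" unfolding V_def using span_minimal subF by blast
            then have "n \<le> l" unfolding n_def l_def by (rule dim_subset)
            then show False using 3 by simp
          qed
          have m2: "2 \<le> m"
          proof (rule ccontr)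
            assume "\<not> 2 \<le> m"
            moreover have "GG \<noteq> {}" using Obne by (simp add: GG_def)
            then have "m \<noteq> 0" using finGG by (simp add: m_def)
            ultimately have "m = 1" by simp
            then obtain H0 where H0: "GG = {H0}" unfolding m_def by (rule card_1_singletonE)
            obtain r0 where r0: "r0 \<in> Ob" "H0 = G r0" using H0 unfolding GG_def by (metis imageE insertI1)
            have "cb r \<in> H0" for r
            proof (cases "r \<in> Ob")
              case True
              then have "G r \<in> GG" by (simp add: GG_def)
              then show ?thesis using H0 cbG[of r] by simp
            next
              case False
              then show ?thesis using FG[of r0] r0 by (auto simp: Ob_def)
            qed
            then have "range cb \<subseteq> H0" by auto
            then have "V \<subseteq> H0" unfolding V_def using span_minimal subG r0 by blast
            then have "n \<le> dim H0" unfolding n_def by (rule dim_subset)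
            then show False using Gdim[OF r0(1)] r0 3 by simp
          qed
          have "Nbf F \<le> Nf F"
            by (rule count_arith[OF _ _ ineq m2, where R="CARD('r)"]) (use SA c1 SB c2 in linarith)+
          then show ?thesis by (simp add: F_def)
        qed
      qed
    qed
    then show "\<And>T. Nbf (span (cb ` T)) \<le> Nf (span (cb ` T))" by blast
  qed
  have cnz: "c r \<noteq> 0" for r by (rule kr_nonzero[OF kr]) (use K2 in simp)
  have cbnz: "cb r \<noteq> 0" for r
  proof -
    have "Nbf (span (cb ` {})) \<le> Nf (span (cb ` {}))" by (rule main)
    moreover have "Nf (span (cb ` {})) = 0" using cnz by (simp add: Nf_def)
    ultimately have "{s. cb s \<in> span {}} = {}" by (simp add: Nbf_def)
    then show ?thesis by auto
  qed
  have line_le1: "Nf (span {cb r0}) \<le> 1" for r0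
  proof -
    have "\<forall>s1\<in>{s. c s \<in> span {cb r0}}. \<forall>s2\<in>{s. c s \<in> span {cb r0}}. s1 = s2"
    proof (intro ballI)
      fix s1 s2 assume "s1 \<in> {s. c s \<in> span {cb r0}}" "s2 \<in> {s. c s \<in> span {cb r0}}"
      then obtain t1 t2 where t: "c s1 = t1 *\<^sub>R cb r0" "c s2 = t2 *\<^sub>R cb r0"
        by (auto simp: span_singleton)
      have "t1 \<noteq> 0" using t cnz[of s1] by auto
      have "t2 *\<^sub>R c s1 + (- t1) *\<^sub>R c s2 = 0" using t by (simp add: algebra_simps)
      then show "s1 = s2" using kr_pair[OF kr K2, of s1 s2 t2 "- t1"] \<open>t1 \<noteq> 0\<close> by auto
    qed
    then show ?thesis unfolding Nf_def by (simp add: card_le_Suc0_iff_eq)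
  qed
  have ex: "\<exists>s. c s \<in> span {cb r0}" for r0
  proof -
    have "Nbf (span (cb ` {r0})) \<le> Nf (span (cb ` {r0}))" by (rule main)
    moreover have "1 \<le> Nbf (span {cb r0})"
    proof -
      have "r0 \<in> {r. cb r \<in> span {cb r0}}" by (auto intro: span_base)
      then have "{r. cb r \<in> span {cb r0}} \<noteq> {}" by blast
      then show ?thesis unfolding Nbf_def by (simp add: Suc_le_eq card_gt_0_iff)
    qed
    ultimately have "0 < card {s. c s \<in> span {cb r0}}" by (simp add: Nf_def)
    then have "{s. c s \<in> span {cb r0}} \<noteq> {}" by (simp add: card_gt_0_iff)
    then show ?thesis by auto
  qed
  define \<pi> where "\<pi> = (\<lambda>r. SOME s. c s \<in> span {cb r})"
  have \<pi>: "c (\<pi> r) \<in> span {cb r}" for r unfolding \<pi>_def by (rule someI_ex[OF ex])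
  have inj: "inj \<pi>"
  proof (rule injI, rule ccontr)
    fix r0 r1 assume eq: "\<pi> r0 = \<pi> r1" and ne: "r0 \<noteq> r1"
    obtain t0 t1 where t: "c (\<pi> r0) = t0 *\<^sub>R cb r0" "c (\<pi> r1) = t1 *\<^sub>R cb r1"
      using \<pi>[of r0] \<pi>[of r1] by (auto simp: span_singleton)
    have "t1 \<noteq> 0" using t(2) cnz[of "\<pi> r1"] by auto
    have e: "t1 *\<^sub>R cb r1 = t0 *\<^sub>R cb r0" using t eq by simp
    have "cb r1 = (1/t1) *\<^sub>R (t1 *\<^sub>R cb r1)" using \<open>t1 \<noteq> 0\<close> by simp
    also have "\<dots> = (t0 / t1) *\<^sub>R cb r0" unfolding e by simp
    finally have "cb r1 = (t0 / t1) *\<^sub>R cb r0" .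
    then have "cb r1 \<in> span {cb r0}" by (auto simp: span_singleton)
    then have "{r0, r1} \<subseteq> {r. cb r \<in> span {cb r0}}" by (auto intro: span_base)
    then have "2 \<le> Nbf (span {cb r0})" unfolding Nbf_def
      using card_mono[of "{r. cb r \<in> span {cb r0}}" "{r0, r1}"] ne by simp
    moreover have "Nbf (span (cb ` {r0})) \<le> Nf (span (cb ` {r0}))" by (rule main)
    ultimately show False using line_le1[of r0] by simp
  qed
  have "bij \<pi>" using inj by (simp add: bij_def finite_UNIV_inj_surj)
  moreover have "\<exists>l. l \<noteq> 0 \<and> cb r = l *\<^sub>R c (\<pi> r)" for r
  proof -
    obtain t where t: "c (\<pi> r) = t *\<^sub>R cb r" using \<pi>[of r] by (auto simp: span_singleton)
    have "t \<noteq> 0" using t cnz[of "\<pi> r"] by auto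
    then show ?thesis using t by (intro exI[of _ "1/t"]) simp
  qed
  ultimately show ?thesis by blast
qed


lemma exists_dual:
  fixes v :: "'r \<Rightarrow> 'a::euclidean_space"
  assumes kr: "kr K v" and U: "finite U" "card U \<le> K" "s1 \<in> U"
  shows "\<exists>\<psi>. \<forall>s\<in>U. v s \<bullet> \<psi> = (if s = s1 then 1 else 0)"
proof -
  define W where "W = v ` (U - {s1})"
  have "0 < card U" using U card_gt_0_iff by blast
  then have "card (U - {s1}) < K" using U by (simp add: card_Diff_singleton)
  then have nW: "v s1 \<notin> span W" unfolding W_def
    using kr_not_in_span[OF kr] U by simp
  obtain y z where yz: "y \<in> span W" "\<And>w. w \<in> span W \<Longrightarrow> orthogonal z w" "v s1 = y + z"
    using orthogonal_subspace_decomp_exists[of W "v s1"] by blast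
  have "z \<noteq> 0" using nW yz by auto
  have yz0: "y \<bullet> z = 0" using yz(2)[OF yz(1)] by (simp add: orthogonal_def inner_commute)
  show ?thesis
  proof (intro exI[of _ "z /\<^sub>R (z \<bullet> z)"] ballI)
    fix s assume s: "s \<in> U"
    show "v s \<bullet> (z /\<^sub>R (z \<bullet> z)) = (if s = s1 then 1 else 0)"
    proof (cases "s = s1")
      case True
      then show ?thesis using yz(3) yz0 \<open>z \<noteq> 0\<close> by (simp add: inner_add_left)
    next
      case False
      then have "v s \<in> span W" using s by (auto simp: W_def intro: span_base)
      then have "z \<bullet> v s = 0" using yz(2) by (simp add: orthogonal_def)
      then show ?thesis using False by (simp add: inner_commute)
    qed
  qed
qed

lemma exists_x:
  fixes c :: "'r::finite \<Rightarrow> 'c::euclidean_space"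
  assumes kr: "kr KC c" and K: "2 \<le> KC" "KC \<le> CARD('r)" and ne: "s0 \<noteq> s1"
  shows "\<exists>x. c s0 \<bullet> x = 1 \<and> c s1 \<bullet> x = 0 \<and> card {s. c s \<bullet> x \<noteq> 0} + KC \<le> CARD('r) + 1"
proof -
  have "card (UNIV - {s0, s1}) = CARD('r) - 2" using ne by (simp add: card_Diff_subset)
  then have "KC - 2 \<le> card (UNIV - {s0, s1})" using K by simp
  then obtain S' where S': "S' \<subseteq> UNIV - {s0, s1}" "card S' = KC - 2" "finite S'"
    by (rule obtain_subset_with_card_n)
  define S where "S = insert s1 S'"
  have s1S': "s1 \<notin> S'" using S'(1) by blast
  have s0S: "s0 \<notin> S" using S'(1) ne by (auto simp: S_def)
  have finS: "finite S" using S'(3) by (simp add: S_def)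
  have cS: "card S = KC - 1" using S'(2,3) s1S' K unfolding S_def by simp
  have cU: "card (insert s0 S) = KC" using cS s0S finS K by simp
  obtain x where x: "\<forall>s\<in>insert s0 S. c s \<bullet> x = (if s = s0 then 1 else 0)"
    using exists_dual[OF kr, of "insert s0 S" s0] cU finS by auto
  have "{s. c s \<bullet> x \<noteq> 0} \<subseteq> UNIV - S"
  proof safe
    fix s assume "c s \<bullet> x \<noteq> 0" "s \<in> S"
    then show False using x s0S by (metis insert_iff)
  qed simp
  then have "card {s. c s \<bullet> x \<noteq> 0} \<le> card (UNIV - S)" by (rule card_mono[rotated]) simp
  also have "\<dots> = CARD('r) - card S" using finS by (simp add: card_Diff_subset)
  finally have cx: "card {s. c s \<bullet> x \<noteq> 0} + KC \<le> CARD('r) + 1" using cS K by linarith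
  have "c s0 \<bullet> x = 1" using x by simp
  moreover have "c s1 \<bullet> x = 0" using x ne by (simp add: S_def)
  ultimately show ?thesis using cx by blast
qed

lemma sum_single:
  fixes f :: "'r::finite \<Rightarrow> 'b::comm_monoid_add"
  assumes "\<And>r. r \<noteq> s0 \<Longrightarrow> f r = 0"
  shows "(\<Sum>r\<in>UNIV. f r) = f s0"
proof -
  have "(\<Sum>r\<in>UNIV. f r) = f s0 + (\<Sum>r\<in>UNIV - {s0}. f r)"
    by (simp add: sum.remove)
  also have "(\<Sum>r\<in>UNIV - {s0}. f r) = 0" using assms by (intro sum.neutral) auto
  finally show ?thesis by simp
qed

lemma match_aux:
  fixes a :: "'r::finite \<Rightarrow> 'a::euclidean_space" and b :: "'r \<Rightarrow> 'b::euclidean_space"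
    and c :: "'r \<Rightarrow> 'c::euclidean_space" and pA pB pC :: "'r \<Rightarrow> 'r"
  assumes id: "\<And>v. (\<Sum>r\<in>UNIV. ((c r \<bullet> x) * (b r \<bullet> v)) *\<^sub>R a r)
                  = (\<Sum>r\<in>UNIV. (\<mu> r * (c (pC r) \<bullet> x) * (b (pB r) \<bullet> v)) *\<^sub>R a (pA r))"
    and KA: "kr KA a" and KB: "kr KB b"
    and U1: "card {s. c s \<bullet> x \<noteq> 0} \<le> KB" and U2: "card {s. c s \<bullet> x \<noteq> 0} < KA"
    and bij: "bij pC"
    and r: "c (pC r) \<bullet> x \<noteq> 0"
  shows "c (pA r) \<bullet> x \<noteq> 0"
proof -
  define U where "U = {s. c s \<bullet> x \<noteq> 0}"
  define Q where "Q = pA ` {r. pC r \<in> U}"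
  have finU: "finite U" by simp
  have inQ: "a s1 \<in> span (a ` Q)" if s1: "s1 \<in> U" for s1
  proof -
    obtain \<psi> where \<psi>: "\<forall>s\<in>U. b s \<bullet> \<psi> = (if s = s1 then 1 else 0)"
      using exists_dual[OF KB finU _ s1] U1 by (auto simp: U_def)
    have "(\<Sum>r\<in>UNIV. ((c r \<bullet> x) * (b r \<bullet> \<psi>)) *\<^sub>R a r) = ((c s1 \<bullet> x) * (b s1 \<bullet> \<psi>)) *\<^sub>R a s1"
    proof (rule sum_single)
      fix r assume "r \<noteq> s1"
      then show "((c r \<bullet> x) * (b r \<bullet> \<psi>)) *\<^sub>R a r = 0" using \<psi> by (cases "r \<in> U") (auto simp: U_def)
    qed
    also have "\<dots> = (c s1 \<bullet> x) *\<^sub>R a s1" using \<psi> s1 by simp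
    finally have "(c s1 \<bullet> x) *\<^sub>R a s1 = (\<Sum>r\<in>UNIV. (\<mu> r * (c (pC r) \<bullet> x) * (b (pB r) \<bullet> \<psi>)) *\<^sub>R a (pA r))"
      using id[of \<psi>] by simp
    also have "\<dots> = (\<Sum>r\<in>{r. pC r \<in> U}. (\<mu> r * (c (pC r) \<bullet> x) * (b (pB r) \<bullet> \<psi>)) *\<^sub>R a (pA r))"
      by (rule sum.mono_neutral_right) (auto simp: U_def)
    also have "\<dots> \<in> span (a ` Q)"
      by (rule span_sum) (auto simp: Q_def intro: span_scale span_base)
    finally have "(c s1 \<bullet> x) *\<^sub>R a s1 \<in> span (a ` Q)" .
    then have "(1 / (c s1 \<bullet> x)) *\<^sub>R ((c s1 \<bullet> x) *\<^sub>R a s1) \<in> span (a ` Q)" by (rule span_scale)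
    then show ?thesis using s1 by (simp add: U_def)
  qed
  have sub: "span (a ` U) \<subseteq> span (a ` Q)"
    using inQ by (intro span_minimal) auto
  have cQ: "card Q \<le> card U"
  proof -
    have "card Q \<le> card {r. pC r \<in> U}" unfolding Q_def by (rule card_image_le) simp
    also have "{r. pC r \<in> U} = pC -` U" by auto
    also have "card (pC -` U) = card U"
      using bij by (intro card_vimage_inj) (auto simp: bij_def)
    finally show ?thesis .
  qed
  have dU: "dim (a ` U) = card U" by (rule kr_dim[OF KA finU]) (use U2 in \<open>simp add: U_def\<close>)
  have "dim (a ` Q) \<le> card (a ` Q)" by (rule dim_le_card') simp
  also have "\<dots> \<le> card Q" by (rule card_image_le) simp
  finally have dQ: "dim (span (a ` Q)) \<le> dim (span (a ` U))" using cQ dU by simp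
  have eq: "span (a ` U) = span (a ` Q)"
    by (rule subspace_dim_equal[OF _ _ sub dQ]) simp_all
  have "pA r \<in> Q" using r by (auto simp: Q_def U_def)
  then have "a (pA r) \<in> span (a ` U)" unfolding eq by (auto intro: span_base)
  then have "pA r \<in> U" using kr_not_in_span[OF KA finU] U2 by (auto simp: U_def)
  then show ?thesis by (simp add: U_def)
qed


theorem kruskal:
  fixes a ab :: "'r::finite \<Rightarrow> 'a::euclidean_space" and b bb :: "'r \<Rightarrow> 'b::euclidean_space"
    and c cb :: "'r \<Rightarrow> 'c::euclidean_space"
  assumes TI: "\<forall>u v w. (\<Sum>r\<in>UNIV. (a r \<bullet> u) * (b r \<bullet> v) * (c r \<bullet> w)) = (\<Sum>r\<in>UNIV. (ab r \<bullet> u) * (bb r \<bullet> v) * (cb r \<bullet> w))"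
    and KA: "kr KA a" and KB: "kr KB b" and KC: "kr KC c"
    and le: "KA \<le> CARD('r)" "KB \<le> CARD('r)" "KC \<le> CARD('r)"
    and sum: "2 * CARD('r) + 2 \<le> KA + KB + KC"
  shows "\<exists>\<pi>. bij \<pi> \<and> (\<forall>r. \<exists>\<alpha> \<beta> \<gamma>. ab r = \<alpha> *\<^sub>R a (\<pi> r) \<and> bb r = \<beta> *\<^sub>R b (\<pi> r) \<and> cb r = \<gamma> *\<^sub>R c (\<pi> r) \<and> \<alpha> * \<beta> * \<gamma> = 1)"
proof -
  have K2: "2 \<le> KA" "2 \<le> KB" "2 \<le> KC" using le sum by linarith+
  have TIa: "\<forall>u v w. (\<Sum>r\<in>UNIV. (b r \<bullet> u) * (c r \<bullet> v) * (a r \<bullet> w)) = (\<Sum>r\<in>UNIV. (bb r \<bullet> u) * (cb r \<bullet> v) * (ab r \<bullet> w))"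
  proof (intro allI)
    fix u v w
    show "(\<Sum>r\<in>UNIV. (b r \<bullet> u) * (c r \<bullet> v) * (a r \<bullet> w)) = (\<Sum>r\<in>UNIV. (bb r \<bullet> u) * (cb r \<bullet> v) * (ab r \<bullet> w))"
      using TI[rule_format, of w u v] by (simp add: ac_simps)
  qed
  have TIb: "\<forall>u v w. (\<Sum>r\<in>UNIV. (c r \<bullet> u) * (a r \<bullet> v) * (b r \<bullet> w)) = (\<Sum>r\<in>UNIV. (cb r \<bullet> u) * (ab r \<bullet> v) * (bb r \<bullet> w))"
  proof (intro allI)
    fix u v w
    show "(\<Sum>r\<in>UNIV. (c r \<bullet> u) * (a r \<bullet> v) * (b r \<bullet> w)) = (\<Sum>r\<in>UNIV. (cb r \<bullet> u) * (ab r \<bullet> v) * (bb r \<bullet> w))"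
      using TI[rule_format, of v w u] by (simp add: ac_simps)
  qed
  have sumA: "2 * CARD('r) + 2 \<le> KB + KC + KA" and sumB: "2 * CARD('r) + 2 \<le> KC + KA + KB"
    using sum by linarith+
  obtain pC where pC: "bij pC" "\<forall>r. \<exists>l. l \<noteq> 0 \<and> cb r = l *\<^sub>R c (pC r)"
    using perm_lemma[OF KC K2(3) le(3) kruskal_hyp[OF TI KA KB le(1,2) sum]] by blast
  obtain pA where pA: "bij pA" "\<forall>r. \<exists>l. l \<noteq> 0 \<and> ab r = l *\<^sub>R a (pA r)"
    using perm_lemma[OF KA K2(1) le(1) kruskal_hyp[OF TIa KB KC le(2,3) sumA]] by blast
  obtain pB where pB: "bij pB" "\<forall>r. \<exists>l. l \<noteq> 0 \<and> bb r = l *\<^sub>R b (pB r)"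
    using perm_lemma[OF KB K2(2) le(2) kruskal_hyp[OF TIb KC KA le(3,1) sumB]] by blast
  obtain \<alpha> where \<alpha>: "\<forall>r. \<alpha> r \<noteq> 0 \<and> ab r = \<alpha> r *\<^sub>R a (pA r)" using choice[OF pA(2)] by blast
  obtain \<beta> where \<beta>: "\<forall>r. \<beta> r \<noteq> 0 \<and> bb r = \<beta> r *\<^sub>R b (pB r)" using choice[OF pB(2)] by blast
  obtain \<gamma> where \<gamma>: "\<forall>r. \<gamma> r \<noteq> 0 \<and> cb r = \<gamma> r *\<^sub>R c (pC r)" using choice[OF pC(2)] by blast
  define \<mu> where "\<mu> = (\<lambda>r. \<alpha> r * \<beta> r * \<gamma> r)"
  have TS: "(\<Sum>r\<in>UNIV. (a r \<bullet> u) * (b r \<bullet> v) * (c r \<bullet> w))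
      = (\<Sum>r\<in>UNIV. \<mu> r * (a (pA r) \<bullet> u) * (b (pB r) \<bullet> v) * (c (pC r) \<bullet> w))" for u v w
    using TI \<alpha> \<beta> \<gamma> by (simp add: \<mu>_def ac_simps)
  have vecA: "(\<Sum>r\<in>UNIV. ((c r \<bullet> x) * (b r \<bullet> v)) *\<^sub>R a r)
             = (\<Sum>r\<in>UNIV. (\<mu> r * (c (pC r) \<bullet> x) * (b (pB r) \<bullet> v)) *\<^sub>R a (pA r))" for x v
  proof (rule vector_eq_ldot[THEN iffD1], rule allI)
    fix u
    have "u \<bullet> (\<Sum>r\<in>UNIV. ((c r \<bullet> x) * (b r \<bullet> v)) *\<^sub>R a r) = (\<Sum>r\<in>UNIV. (a r \<bullet> u) * (b r \<bullet> v) * (c r \<bullet> x))"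
      by (simp add: inner_sum_right inner_commute ac_simps)
    also have "\<dots> = (\<Sum>r\<in>UNIV. \<mu> r * (a (pA r) \<bullet> u) * (b (pB r) \<bullet> v) * (c (pC r) \<bullet> x))" by (rule TS)
    also have "\<dots> = u \<bullet> (\<Sum>r\<in>UNIV. (\<mu> r * (c (pC r) \<bullet> x) * (b (pB r) \<bullet> v)) *\<^sub>R a (pA r))"
      by (simp add: inner_sum_right inner_commute ac_simps)
    finally show "u \<bullet> (\<Sum>r\<in>UNIV. ((c r \<bullet> x) * (b r \<bullet> v)) *\<^sub>R a r) = u \<bullet> (\<Sum>r\<in>UNIV. (\<mu> r * (c (pC r) \<bullet> x) * (b (pB r) \<bullet> v)) *\<^sub>R a (pA r))" .
  qed
  have vecB: "(\<Sum>r\<in>UNIV. ((c r \<bullet> x) * (a r \<bullet> v)) *\<^sub>R b r)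
             = (\<Sum>r\<in>UNIV. (\<mu> r * (c (pC r) \<bullet> x) * (a (pA r) \<bullet> v)) *\<^sub>R b (pB r))" for x v
  proof (rule vector_eq_ldot[THEN iffD1], rule allI)
    fix u
    have "u \<bullet> (\<Sum>r\<in>UNIV. ((c r \<bullet> x) * (a r \<bullet> v)) *\<^sub>R b r) = (\<Sum>r\<in>UNIV. (a r \<bullet> v) * (b r \<bullet> u) * (c r \<bullet> x))"
      by (simp add: inner_sum_right inner_commute ac_simps)
    also have "\<dots> = (\<Sum>r\<in>UNIV. \<mu> r * (a (pA r) \<bullet> v) * (b (pB r) \<bullet> u) * (c (pC r) \<bullet> x))" by (rule TS)
    also have "\<dots> = u \<bullet> (\<Sum>r\<in>UNIV. (\<mu> r * (c (pC r) \<bullet> x) * (a (pA r) \<bullet> v)) *\<^sub>R b (pB r))"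
      by (simp add: inner_sum_right inner_commute ac_simps)
    finally show "u \<bullet> (\<Sum>r\<in>UNIV. ((c r \<bullet> x) * (a r \<bullet> v)) *\<^sub>R b r) = u \<bullet> (\<Sum>r\<in>UNIV. (\<mu> r * (c (pC r) \<bullet> x) * (a (pA r) \<bullet> v)) *\<^sub>R b (pB r))" .
  qed
  have AC: "pA r = pC r" for r
  proof (rule ccontr)
    assume ne: "pA r \<noteq> pC r"
    obtain x where x: "c (pC r) \<bullet> x = 1" "c (pA r) \<bullet> x = 0" "card {s. c s \<bullet> x \<noteq> 0} + KC \<le> CARD('r) + 1"
      using exists_x[OF KC K2(3) le(3), of "pC r" "pA r"] ne[symmetric] by blast
    have "c (pA r) \<bullet> x \<noteq> 0"
      by (rule match_aux[OF vecA KA KB _ _ pC(1)]) (use x le sum in linarith)+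
    then show False using x by simp
  qed
  have BC: "pB r = pC r" for r
  proof (rule ccontr)
    assume ne: "pB r \<noteq> pC r"
    obtain x where x: "c (pC r) \<bullet> x = 1" "c (pB r) \<bullet> x = 0" "card {s. c s \<bullet> x \<noteq> 0} + KC \<le> CARD('r) + 1"
      using exists_x[OF KC K2(3) le(3), of "pC r" "pB r"] ne[symmetric] by blast
    have "c (pB r) \<bullet> x \<noteq> 0"
      by (rule match_aux[OF vecB KB KA _ _ pC(1)]) (use x le sum in linarith)+
    then show False using x by simp
  qed
  have mu1: "\<mu> r0 = 1" for r0
  proof -
    define s0 where "s0 = pC r0"
    have "card (UNIV::'r set) \<ge> 2" using K2 le by linarith
    then have "card (UNIV - {s0}) \<ge> 1" by (simp add: card_Diff_subset)
    then have "UNIV - {s0} \<noteq> {}" by (metis card.empty not_one_le_zero)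
    then obtain s1 :: 'r where "s1 \<noteq> s0" by blast
    then obtain x where x: "c s0 \<bullet> x = 1" "card {s. c s \<bullet> x \<noteq> 0} + KC \<le> CARD('r) + 1"
      using exists_x[OF KC K2(3) le(3), of s0 s1] by blast
    define U where "U = {s. c s \<bullet> x \<noteq> 0}"
    have s0U: "s0 \<in> U" using x by (simp add: U_def)
    have finU: "finite U" by simp
    obtain \<phi> where \<phi>: "\<forall>s\<in>U. a s \<bullet> \<phi> = (if s = s0 then 1 else 0)"
      using exists_dual[OF KA finU _ s0U] x le sum by (fastforce simp: U_def)
    obtain \<psi> where \<psi>: "\<forall>s\<in>U. b s \<bullet> \<psi> = (if s = s0 then 1 else 0)"
      using exists_dual[OF KB finU _ s0U] x le sum by (fastforce simp: U_def)
    have van: "(a s \<bullet> \<phi>) * (b s \<bullet> \<psi>) * (c s \<bullet> x) = (if s = s0 then 1 else 0)" for s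
    proof (cases "s \<in> U")
      case True then show ?thesis using \<phi> \<psi> x by (auto simp: U_def s0_def)
    next
      case False then show ?thesis using s0U by (auto simp: U_def)
    qed
    have "(\<Sum>r\<in>UNIV. (a r \<bullet> \<phi>) * (b r \<bullet> \<psi>) * (c r \<bullet> x)) = 1"
      by (subst sum_single[of s0]) (use van in auto)
    moreover have "(\<Sum>r\<in>UNIV. \<mu> r * (a (pA r) \<bullet> \<phi>) * (b (pB r) \<bullet> \<psi>) * (c (pC r) \<bullet> x)) = \<mu> r0"
    proof (subst sum_single[of r0])
      fix r assume "r \<noteq> r0"
      then have "pC r \<noteq> s0" using pC(1) by (auto simp: s0_def bij_def inj_def)
      then show "\<mu> r * (a (pA r) \<bullet> \<phi>) * (b (pB r) \<bullet> \<psi>) * (c (pC r) \<bullet> x) = 0"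
        using van[of "pC r"] AC[of r] BC[of r] by (simp add: mult.assoc)
    next
      show "\<mu> r0 * (a (pA r0) \<bullet> \<phi>) * (b (pB r0) \<bullet> \<psi>) * (c (pC r0) \<bullet> x) = \<mu> r0"
        using van[of s0] AC[of r0] BC[of r0] by (simp add: s0_def mult.assoc)
    qed
    ultimately show ?thesis using TS[of \<phi> \<psi> x] by simp
  qed
  show ?thesis
  proof (intro exI[of _ pC] conjI allI)
    show "bij pC" by (rule pC(1))
    fix r
    show "\<exists>\<alpha>' \<beta>' \<gamma>'. ab r = \<alpha>' *\<^sub>R a (pC r) \<and> bb r = \<beta>' *\<^sub>R b (pC r) \<and> cb r = \<gamma>' *\<^sub>R c (pC r) \<and> \<alpha>' * \<beta>' * \<gamma>' = 1"
      using \<alpha> \<beta> \<gamma> AC[of r] BC[of r] mu1[of r] by (auto simp: \<mu>_def)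
  qed
qed


instantiation "fun" :: (type, real_vector) real_vector
begin
definition scaleR_fun :: "real \<Rightarrow> ('a \<Rightarrow> 'b) \<Rightarrow> 'a \<Rightarrow> 'b" where
  "scaleR_fun c f = (\<lambda>x. c *\<^sub>R f x)"
instance
  by standard (auto simp: scaleR_fun_def fun_eq_iff scaleR_add_right scaleR_add_left)
end

lemma scaleR_fun_apply: "(c *\<^sub>R f) x = c *\<^sub>R f x"
  by (simp add: scaleR_fun_def)

lemma sum_fun_apply: "(\<Sum>j\<in>S. f j) x = (\<Sum>j\<in>S. f j x)"
  by (induction S rule: infinite_finite_induct) auto

lemma transport:
  fixes X :: "('y \<Rightarrow> real) set"
  assumes "finite X" "card X \<le> CARD('n::finite)"
  shows "\<exists>E :: ('y \<Rightarrow> real) \<Rightarrow> real^'n. linear E \<and> inj_on E (span X)"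
proof -
  obtain B where B: "B \<subseteq> X" "independent B" "X \<subseteq> span B"
    by (rule maximal_independent_subset)
  have finB: "finite B" using B(1) assms(1) by (rule finite_subset)
  have "card B \<le> card (UNIV :: 'n set)" using card_mono[OF assms(1) B(1)] assms(2) by simp
  then obtain \<iota> :: "('y \<Rightarrow> real) \<Rightarrow> 'n" where \<iota>: "inj_on \<iota> B"
    using card_le_inj[OF finB, of "UNIV :: 'n set"] by auto
  obtain E where E: "linear E" "\<forall>x\<in>B. E x = axis (\<iota> x) (1::real)"
    using linear_independent_extend[OF B(2), of "\<lambda>x. axis (\<iota> x) (1::real)"] by blast
  have img: "E ` B = (\<lambda>x. axis (\<iota> x) (1::real)) ` B" using E(2) by (intro image_cong) auto
  have "independent ((\<lambda>x. axis (\<iota> x) (1::real)) ` B)"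
    by (rule independent_mono[OF independent_Basis]) (auto simp: Basis_vec_def)
  moreover have "inj_on E B"
  proof (rule inj_onI)
    fix x y assume xy: "x \<in> B" "y \<in> B" "E x = E y"
    then have "axis (\<iota> x) (1::real) = axis (\<iota> y) 1" using E(2) by simp
    then have "\<iota> x = \<iota> y" by (simp add: axis_eq_axis)
    then show "x = y" using inj_onD[OF \<iota> _ xy(1,2)] by simp
  qed
  ultimately have "inj_on E (span B)"
    using linear_inj_on_span_independent_image[OF E(1)] img by simp
  moreover have "span X \<subseteq> span B" using B(3) by (simp add: span_minimal)
  ultimately have "inj_on E (span X)" by (rule inj_on_subset)
  then show ?thesis using E(1) by blast
qed

lemma kr_fun_iff:
  fixes f :: "'r \<Rightarrow> ('y \<Rightarrow> real)"
  shows "kr K f \<longleftrightarrow> (\<forall>S c. finite S \<longrightarrow> card S \<le> K \<longrightarrow> (\<forall>y. (\<Sum>r\<in>S. c r * f r y) = 0) \<longrightarrow> (\<forall>r\<in>S. c r = 0))"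
  unfolding kr_def by (simp add: fun_eq_iff sum_fun_apply scaleR_fun_apply)

lemma kr_transport:
  assumes kr: "kr K f" and E: "linear E" "inj_on E (span X)" and fX: "range f \<subseteq> X"
  shows "kr K (\<lambda>r. E (f r))"
  unfolding kr_def
proof (intro allI impI)
  fix S c assume S: "finite S" "card S \<le> K" and z: "(\<Sum>r\<in>S. c r *\<^sub>R E (f r)) = 0"
  have "E (\<Sum>r\<in>S. c r *\<^sub>R f r) = (\<Sum>r\<in>S. c r *\<^sub>R E (f r))"
    by (simp add: linear_sum[OF E(1)] linear_cmul[OF E(1)])
  then have "E (\<Sum>r\<in>S. c r *\<^sub>R f r) = E 0" using z linear_0[OF E(1)] by simp
  moreover have "(\<Sum>r\<in>S. c r *\<^sub>R f r) \<in> span X"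
    by (rule span_sum) (use fX in \<open>auto intro: span_scale span_base\<close>)
  ultimately have "(\<Sum>r\<in>S. c r *\<^sub>R f r) = 0"
    using inj_onD[OF E(2)] span_zero by blast
  then show "\<forall>r\<in>S. c r = 0" using kr_D[OF kr S] by blast
qed

lemma polar:
  fixes w w' :: "'j::finite \<Rightarrow> 'a::real_inner"
  assumes eq: "\<And>x. (\<Sum>j\<in>UNIV. c j * (w j \<bullet> x)^r) = (\<Sum>j\<in>UNIV. c' j * (w' j \<bullet> x)^r)"
    and pq: "p + q = r"
  shows "(\<Sum>j\<in>UNIV. c j * (w j \<bullet> y)^p * (w j \<bullet> z)^q) = (\<Sum>j\<in>UNIV. c' j * (w' j \<bullet> y)^p * (w' j \<bullet> z)^q)"
proof -
  define C where "C = (\<lambda>(c::'j \<Rightarrow> real) (w::'j \<Rightarrow> 'a) i. of_nat (r choose i) * (\<Sum>j\<in>UNIV. c j * (w j \<bullet> z)^i * (w j \<bullet> y)^(r - i)))"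
  have expand: "(\<Sum>j\<in>UNIV. c j * (w j \<bullet> (y + s *\<^sub>R z))^r) = (\<Sum>i\<le>r. C c w i * s^i)"
    for c :: "'j \<Rightarrow> real" and w :: "'j \<Rightarrow> 'a" and s :: real
  proof -
    have pj: "(w j \<bullet> (y + s *\<^sub>R z))^r = (\<Sum>i\<le>r. of_nat (r choose i) * (s * (w j \<bullet> z))^i * (w j \<bullet> y)^(r-i))" for j
    proof -
      have "w j \<bullet> (y + s *\<^sub>R z) = s * (w j \<bullet> z) + w j \<bullet> y" by (simp add: inner_add_right)
      then show ?thesis by (simp only: binomial_ring)
    qed
    have "(\<Sum>j\<in>UNIV. c j * (w j \<bullet> (y + s *\<^sub>R z))^r)
        = (\<Sum>j\<in>UNIV. \<Sum>i\<le>r. c j * (of_nat (r choose i) * (s * (w j \<bullet> z))^i * (w j \<bullet> y)^(r-i)))"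
      by (simp only: pj sum_distrib_left)
    also have "\<dots> = (\<Sum>i\<le>r. \<Sum>j\<in>UNIV. c j * (of_nat (r choose i) * (s * (w j \<bullet> z))^i * (w j \<bullet> y)^(r-i)))"
      by (rule sum.swap)
    also have "\<dots> = (\<Sum>i\<le>r. C c w i * s^i)"
    proof (rule sum.cong[OF refl])
      fix i
      have "(\<Sum>j\<in>UNIV. c j * (of_nat (r choose i) * (s * (w j \<bullet> z))^i * (w j \<bullet> y)^(r-i)))
          = (\<Sum>j\<in>UNIV. (of_nat (r choose i) * s^i) * (c j * (w j \<bullet> z)^i * (w j \<bullet> y)^(r-i)))"
        by (rule sum.cong[OF refl]) (simp add: power_mult_distrib)
      also have "\<dots> = (of_nat (r choose i) * s^i) * (\<Sum>j\<in>UNIV. c j * (w j \<bullet> z)^i * (w j \<bullet> y)^(r-i))"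
        by (simp only: sum_distrib_left)
      also have "\<dots> = C c w i * s^i" by (simp add: C_def)
      finally show "(\<Sum>j\<in>UNIV. c j * (of_nat (r choose i) * (s * (w j \<bullet> z))^i * (w j \<bullet> y)^(r-i))) = C c w i * s^i" .
    qed
    finally show ?thesis .
  qed
  have "\<forall>s. (\<Sum>i\<le>r. C c w i * s^i) = (\<Sum>i\<le>r. C c' w' i * s^i)"
    using eq expand by metis
  then have "C c w q = C c' w' q" using polyfun_eq_coeffs[of "C c w" r "C c' w'"] pq by auto
  then have "(\<Sum>j\<in>UNIV. c j * (w j \<bullet> z)^q * (w j \<bullet> y)^p) = (\<Sum>j\<in>UNIV. c' j * (w' j \<bullet> z)^q * (w' j \<bullet> y)^p)"
    using pq[symmetric] by (simp add: C_def)
  then show ?thesis by (simp add: ac_simps)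
qed


inductive_set pfun :: "('a::euclidean_space \<Rightarrow> real) set" where
  pf_const: "(\<lambda>x. c) \<in> pfun"
| pf_lin: "linear f \<Longrightarrow> f \<in> pfun"
| pf_add: "f \<in> pfun \<Longrightarrow> g \<in> pfun \<Longrightarrow> (\<lambda>x. f x + g x) \<in> pfun"
| pf_mult: "f \<in> pfun \<Longrightarrow> g \<in> pfun \<Longrightarrow> (\<lambda>x. f x * g x) \<in> pfun"

lemma pf_sum: "finite S \<Longrightarrow> (\<And>i. i \<in> S \<Longrightarrow> f i \<in> pfun) \<Longrightarrow> (\<lambda>x. \<Sum>i\<in>S. f i x) \<in> pfun"
proof (induction S rule: finite_induct)
  case empty
  then show ?case using pf_const[of 0] by simp
next
  case (insert a S)
  then show ?case using pf_add[of "f a" "\<lambda>x. \<Sum>i\<in>S. f i x"] by simp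
qed

lemma pf_prod: "finite S \<Longrightarrow> (\<And>i. i \<in> S \<Longrightarrow> f i \<in> pfun) \<Longrightarrow> (\<lambda>x. \<Prod>i\<in>S. f i x) \<in> pfun"
proof (induction S rule: finite_induct)
  case empty
  then show ?case using pf_const[of 1] by simp
next
  case (insert a S)
  then show ?case using pf_mult[of "f a" "\<lambda>x. \<Prod>i\<in>S. f i x"] by simp
qed

lemma pf_pow: "f \<in> pfun \<Longrightarrow> (\<lambda>x. f x ^ n) \<in> pfun"
proof (induction n)
  case 0 then show ?case using pf_const[of 1] by simp
next
  case (Suc n) then show ?case using pf_mult[of f "\<lambda>x. f x ^ n"] by simp
qed

lemma pf_cont: "f \<in> pfun \<Longrightarrow> continuous_on UNIV f"
proof (induction rule: pfun.induct)
  case (pf_const c) then show ?case by (rule continuous_on_const)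
next
  case (pf_lin f) then show ?case by (simp add: linear_continuous_on linear_conv_bounded_linear)
next
  case (pf_add f g) then show ?case by (intro continuous_on_add)
next
  case (pf_mult f g) then show ?case by (intro continuous_on_mult)
qed

lemma pf_translate: "f \<in> pfun \<Longrightarrow> (\<lambda>x. f (x + a)) \<in> pfun"
proof (induction rule: pfun.induct)
  case (pf_const c) then show ?case by (rule pfun.pf_const)
next
  case (pf_lin f)
  have "(\<lambda>x. f (x + a)) = (\<lambda>x. f x + f a)" using linear_add[OF pf_lin] by auto
  then show ?case using pfun.pf_add[OF pfun.pf_lin[OF pf_lin] pfun.pf_const[of "f a"]] by simp
next
  case (pf_add f g) then show ?case using pfun.pf_add by blast
next
  case (pf_mult f g) then show ?case using pfun.pf_mult by blast
qed

lemma pf_ray: "f \<in> pfun \<Longrightarrow> \<exists>p. \<forall>t. f (t *\<^sub>R y) = poly p t"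
proof (induction rule: pfun.induct)
  case (pf_const c) then show ?case by (intro exI[of _ "[:c:]"]) simp
next
  case (pf_lin f)
  then show ?case by (intro exI[of _ "[:0, f y:]"]) (simp add: linear_cmul[OF pf_lin])
next
  case (pf_add f g)
  then obtain p q where "\<forall>t. f (t *\<^sub>R y) = poly p t" "\<forall>t. g (t *\<^sub>R y) = poly q t" by blast
  then show ?case by (intro exI[of _ "p + q"]) simp
next
  case (pf_mult f g)
  then obtain p q where "\<forall>t. f (t *\<^sub>R y) = poly p t" "\<forall>t. g (t *\<^sub>R y) = poly q t" by blast
  then show ?case by (intro exI[of _ "p * q"]) simp
qed

lemma borel_lebesgue: "A \<in> sets borel \<Longrightarrow> A \<in> sets lebesgue"
  by (simp add: sets_completionI_sets)


lemma pfun_null0: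
  fixes f :: "'a::euclidean_space \<Rightarrow> real"
  assumes pf: "f \<in> pfun" and f0: "f 0 \<noteq> 0"
  shows "{x. f x = 0} \<in> null_sets lebesgue"
proof -
  have cont: "continuous_on UNIV f" by (rule pf_cont[OF pf])
  define Z where "Z = {x. f x = 0}"
  have closedZ: "closed Z" unfolding Z_def using closed_Collect_eq[OF cont continuous_on_const] .
  have "isCont f 0" using cont by (simp add: continuous_on_eq_continuous_at)
  then obtain \<eta> where \<eta>: "\<eta> > 0" "\<And>y. dist 0 y < \<eta> \<Longrightarrow> f y \<noteq> 0"
    using continuous_at_avoid[where f=f and x=0 and a=0] f0 by blast
  have Z\<eta>: "\<eta> \<le> norm x" if "x \<in> Z" for x
    using \<eta>(2)[of x] that by (force simp: Z_def dist_norm)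
  define \<delta> where "\<delta> = (\<lambda>n::nat. 1 / real (Suc n))"
  have \<delta>pos: "0 < \<delta> n" for n by (simp add: \<delta>_def)
  have \<delta>le: "\<delta> n \<le> 1" for n by (simp add: \<delta>_def)
  define h where "h = (\<lambda>n. \<eta> * \<delta> n / 2)"
  have hpos: "0 < h n" for n using \<eta>(1) \<delta>pos[of n] by (simp add: h_def)
  define Kn where "Kn = (\<lambda>n. {x. \<forall>s. \<bar>s - 1\<bar> \<le> \<delta> n \<and> s \<noteq> 1 \<longrightarrow> f (s *\<^sub>R x) \<noteq> 0})"
  define Sh where "Sh = (\<lambda>n m. {x::'a. \<eta> + real m * h n \<le> norm x \<and> norm x \<le> \<eta> + real (Suc m) * h n})"
  define P where "P = (\<lambda>(n::nat, m::nat). Z \<inter> Kn n \<inter> Sh n m)"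
  have KnB: "Kn n \<in> sets borel" for n
  proof -
    define T where "T = {p::real \<times> 'a. f (fst p *\<^sub>R snd p) = 0}"
    have contT: "continuous_on UNIV (\<lambda>p::real \<times> 'a. f (fst p *\<^sub>R snd p))"
      by (rule continuous_on_compose2[OF cont]) (auto intro!: continuous_intros)
    have clT: "closed T" unfolding T_def using closed_Collect_eq[OF contT continuous_on_const] .
    define W where "W = (\<lambda>k::nat. {s::real. 1 / real (Suc k) \<le> \<bar>s - 1\<bar> \<and> \<bar>s - 1\<bar> \<le> \<delta> n})"
    have cW: "compact (W k)" for k
    proof (subst compact_eq_bounded_closed, intro conjI)
      show "bounded (W k)"
        unfolding bounded_iff W_def using \<delta>le[of n]
        by (intro exI[of _ 2]) (auto simp: abs_if split: if_splits)
      show "closed (W k)" unfolding W_def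
        by (intro closed_Collect_conj closed_Collect_le continuous_intros)
    qed
    define C where "C = (\<lambda>k. {x. \<exists>s. s \<in> W k \<and> (s, x) \<in> T})"
    have clC: "closed (C k)" for k unfolding C_def by (rule closed_compact_projection[OF cW clT])
    have eq: "Kn n = - (\<Union>k. C k)"
    proof (intro set_eqI iffI)
      fix x assume x: "x \<in> Kn n"
      show "x \<in> - (\<Union>k. C k)"
      proof
        assume "x \<in> (\<Union>k. C k)"
        then obtain k s where "s \<in> W k" "f (s *\<^sub>R x) = 0" by (auto simp: C_def T_def)
        moreover have "0 < 1 / real (Suc k)" by simp
        ultimately show False using x by (auto simp: W_def Kn_def)
      qed
    next
      fix x assume x: "x \<in> - (\<Union>k. C k)"
      show "x \<in> Kn n" unfolding Kn_def
      proof (intro CollectI allI impI)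
        fix s assume s: "\<bar>s - 1\<bar> \<le> \<delta> n \<and> s \<noteq> 1"
        then have "0 < \<bar>s - 1\<bar>" by simp
        then obtain k where "inverse (real (Suc k)) < \<bar>s - 1\<bar>" using reals_Archimedean by blast
        then have "s \<in> W k" using s by (simp add: W_def inverse_eq_divide)
        then show "f (s *\<^sub>R x) \<noteq> 0" using x by (auto simp: C_def T_def)
      qed
    qed
    have "(\<Union>k. C k) \<in> sets borel" using clC by (auto intro: borel_closed)
    then have "UNIV - (\<Union>k. C k) \<in> sets borel" by (metis sets.compl_sets space_borel)
    then show ?thesis unfolding eq by (simp add: Compl_eq_Diff_UNIV)
  qed
  have ShC: "closed (Sh n m)" for n m unfolding Sh_def
    by (intro closed_Collect_conj closed_Collect_le continuous_intros)
  have Pnull: "P (n, m) \<in> null_sets lebesgue" for n m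
  proof (rule starlike_negligible_bounded_gmeasurable)
    show "P (n, m) \<in> sets lebesgue"
      unfolding P_def using closedZ KnB[of n] ShC[of n m]
      by (auto intro!: borel_lebesgue borel_closed)
    show "bounded (P (n, m))"
      by (rule bounded_subset[OF bounded_cball[of 0 "\<eta> + real (Suc m) * h n"]])
         (auto simp: P_def Sh_def)
    fix c x assume cx: "c *\<^sub>R x \<in> P (n, m)" "0 \<le> c" "x \<in> P (n, m)"
    have xZ: "x \<in> Z" "x \<in> Kn n" "x \<in> Sh n m" using cx(3) by (auto simp: P_def)
    have cxZ: "c *\<^sub>R x \<in> Z" "c *\<^sub>R x \<in> Sh n m" using cx(1) by (auto simp: P_def)
    have nx: "\<eta> \<le> norm x" by (rule Z\<eta>[OF xZ(1)])
    have "c \<noteq> 0"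
    proof
      assume "c = 0" then have "f 0 = 0" using cxZ(1) by (simp add: Z_def)
      then show False using f0 by simp
    qed
    have n1: "norm (c *\<^sub>R x) = c * norm x" using cx(2) by simp
    define A where "A = \<eta> + real m * h n"
    have b1: "A \<le> norm x" "norm x \<le> A + h n" using xZ(3) by (auto simp: Sh_def A_def algebra_simps)
    have b2: "A \<le> c * norm x" "c * norm x \<le> A + h n" using cxZ(2) n1 by (auto simp: Sh_def A_def algebra_simps)
    have "\<bar>c * norm x - norm x\<bar> \<le> h n" using b1 b2 by linarith
    moreover have "\<bar>c * norm x - norm x\<bar> = \<bar>c - 1\<bar> * norm x"
    proof -
      have "c * norm x - norm x = (c - 1) * norm x" by (simp add: algebra_simps)
      then show ?thesis by (simp add: abs_mult)
    qed
    ultimately have "\<bar>c - 1\<bar> * norm x \<le> h n" by simp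
    moreover have "h n \<le> \<delta> n * \<eta>" using \<eta>(1) \<delta>pos[of n] by (simp add: h_def)
    moreover have "\<delta> n * \<eta> \<le> \<delta> n * norm x" using nx \<delta>pos[of n] by simp
    ultimately have "\<bar>c - 1\<bar> * norm x \<le> \<delta> n * norm x" by linarith
    moreover have "0 < norm x" using nx \<eta>(1) by linarith
    ultimately have "\<bar>c - 1\<bar> \<le> \<delta> n" by (simp add: mult_le_cancel_right)
    then show "c = 1" using xZ(2) cxZ(1) by (auto simp: Kn_def Z_def)
  qed
  have cover: "Z \<subseteq> (\<Union>nm. P nm)"
  proof
    fix x assume xZ: "x \<in> Z"
    obtain p where p: "\<forall>t. f (t *\<^sub>R x) = poly p t" using pf_ray[OF pf] by blast
    have "p \<noteq> 0" using p[rule_format, of 0] f0 by auto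
    then have finR: "finite ({t. poly p t = 0} - {1})" using poly_roots_finite by blast
    have "\<exists>n. \<forall>s. \<bar>s - 1\<bar> \<le> \<delta> n \<and> s \<noteq> 1 \<longrightarrow> poly p s \<noteq> 0"
    proof (cases "{t. poly p t = 0} - {1} = {}")
      case True then show ?thesis by blast
    next
      case False
      define d where "d = Min ((\<lambda>t. \<bar>t - 1\<bar>) ` ({t. poly p t = 0} - {1}))"
      have "0 < d" unfolding d_def using finR False by (subst Min_gr_iff) auto
      then obtain n where n: "inverse (real (Suc n)) < d" using reals_Archimedean by blast
      have "\<forall>s. \<bar>s - 1\<bar> \<le> \<delta> n \<and> s \<noteq> 1 \<longrightarrow> poly p s \<noteq> 0"
      proof (intro allI impI notI)
        fix s assume s: "\<bar>s - 1\<bar> \<le> \<delta> n \<and> s \<noteq> 1" "poly p s = 0"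
        then have "d \<le> \<bar>s - 1\<bar>" unfolding d_def using finR by (intro Min_le) auto
        then show False using s n by (simp add: \<delta>_def inverse_eq_divide)
      qed
      then show ?thesis by blast
    qed
    then obtain n where n: "\<forall>s. \<bar>s - 1\<bar> \<le> \<delta> n \<and> s \<noteq> 1 \<longrightarrow> poly p s \<noteq> 0" by blast
    have xK: "x \<in> Kn n" using n p by (auto simp: Kn_def)
    define y where "y = (norm x - \<eta>) / h n"
    have y0: "0 \<le> y" using Z\<eta>[OF xZ] hpos[of n] by (simp add: y_def)
    define m where "m = nat \<lfloor>y\<rfloor>"
    have mfl: "real m = of_int \<lfloor>y\<rfloor>" using y0 by (simp add: m_def)
    have "real m \<le> y" "y < real m + 1" using mfl by linarith+
    then have "real m * h n \<le> norm x - \<eta>" "norm x - \<eta> < (real m + 1) * h n"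
      using hpos[of n] by (simp_all add: y_def field_simps)
    then have "x \<in> Sh n m" by (simp add: Sh_def algebra_simps)
    then have "x \<in> P (n, m)" using xZ xK by (simp add: P_def)
    then show "x \<in> (\<Union>nm. P nm)" by blast
  qed
  have "(\<Union>nm. P nm) \<in> null_sets lebesgue" by (rule null_sets_UN) (use Pnull in auto)
  moreover have "Z \<in> sets lebesgue" using closedZ by (auto intro: borel_lebesgue borel_closed)
  ultimately show ?thesis using cover null_sets_subset unfolding Z_def by blast
qed

lemma pfun_null:
  fixes f :: "'a::euclidean_space \<Rightarrow> real"
  assumes pf: "f \<in> pfun" and fa: "f a \<noteq> 0"
  shows "{x. f x = 0} \<in> null_sets lebesgue"
proof -
  have "{x. f (x + a) = 0} \<in> null_sets lebesgue"
    by (rule pfun_null0[OF pf_translate[OF pf]]) (use fa in simp)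
  then have "negligible ((+) a ` {x. f (x + a) = 0})"
    by (intro negligible_translation) (simp add: negligible_iff_null_sets)
  moreover have "(+) a ` {x. f (x + a) = 0} = {x. f x = 0}"
  proof (intro set_eqI iffI)
    fix x assume "x \<in> (+) a ` {x. f (x + a) = 0}" then show "x \<in> {x. f x = 0}" by (auto simp: add.commute)
  next
    fix x assume "x \<in> {x. f x = 0}"
    then have "x - a \<in> {x. f (x + a) = 0}" by simp
    then show "x \<in> (+) a ` {x. f (x + a) = 0}" by (intro image_eqI[of _ _ "x - a"]) auto
  qed
  ultimately show ?thesis by (simp add: negligible_iff_null_sets)
qed


lemma det_nz_kernel:
  fixes A :: "real^'n^'n"
  assumes "\<And>x. A *v x = 0 \<Longrightarrow> x = 0"
  shows "det A \<noteq> 0"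
proof -
  obtain B where "B ** A = mat 1" using matrix_left_invertible_ker[of A] assms by blast
  then have "A ** B = mat 1" using matrix_left_right_inverse by blast
  then have "invertible A" using \<open>B ** A = mat 1\<close> by (auto simp: invertible_def)
  then show ?thesis by (simp add: invertible_det_nz)
qed

lemma det_nz_kernelD:
  fixes A :: "real^'n^'n"
  assumes "det A \<noteq> 0" "A *v x = 0"
  shows "x = 0"
proof -
  have "invertible A" using assms(1) by (simp add: invertible_det_nz)
  then obtain B where "B ** A = mat 1" by (auto simp: invertible_def)
  have "(B ** A) *v x = B *v (A *v x)" by (simp add: matrix_vector_mul_assoc)
  also have "\<dots> = 0" using assms(2) by simp
  finally show ?thesis using \<open>B ** A = mat 1\<close> by simp
qed

lemma pf_det:
  fixes G :: "'P::euclidean_space \<Rightarrow> real^'n^'n"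
  assumes "\<And>i k. (\<lambda>P. G P $ i $ k) \<in> pfun"
  shows "(\<lambda>P. det (G P)) \<in> pfun"
proof -
  have "(\<lambda>P. \<Sum>p\<in>{p. p permutes (UNIV::'n set)}. of_int (sign p) * (\<Prod>i\<in>UNIV. G P $ i $ p i)) \<in> pfun"
  proof (rule pf_sum)
    show "finite {p. p permutes (UNIV::'n set)}" by (simp add: finite_permutations)
    fix p
    show "(\<lambda>P. of_int (sign p) * (\<Prod>i\<in>UNIV. G P $ i $ p i)) \<in> pfun"
      by (rule pf_mult[OF pf_const pf_prod]) (simp_all add: assms)
  qed
  then show ?thesis by (simp add: det_def)
qed

lemma generic_indep:
  fixes v :: "'P::euclidean_space \<Rightarrow> 'j::finite \<Rightarrow> 'y \<Rightarrow> real"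
  assumes pf: "\<And>j y. (\<lambda>P. v P j y) \<in> pfun" and finY: "finite Y"
    and wit: "\<And>c. \<forall>y\<in>Y. (\<Sum>j\<in>S. c j * v Pw j y) = 0 \<Longrightarrow> \<forall>j\<in>S. c j = 0"
  shows "{P. \<not> (\<forall>c. (\<forall>y\<in>Y. (\<Sum>j\<in>S. c j * v P j y) = 0) \<longrightarrow> (\<forall>j\<in>S. c j = 0))} \<in> null_sets lebesgue"
proof -
  define G :: "'P \<Rightarrow> real^'j^'j" where
    "G = (\<lambda>P. \<chi> j l. if j \<in> S \<and> l \<in> S then (\<Sum>y\<in>Y. v P j y * v P l y) else (if j = l then 1 else 0))"
  have pfG: "(\<lambda>P. G P $ i $ k) \<in> pfun" for i k
  proof (cases "i \<in> S \<and> k \<in> S")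
    case True
    then have "(\<lambda>P. G P $ i $ k) = (\<lambda>P. \<Sum>y\<in>Y. v P i y * v P k y)" by (simp add: G_def)
    moreover have "(\<lambda>P. \<Sum>y\<in>Y. v P i y * v P k y) \<in> pfun"
      by (rule pf_sum[OF finY]) (rule pf_mult[OF pf pf])
    ultimately show ?thesis by simp
  next
    case False
    then have e: "(\<lambda>P. G P $ i $ k) = (\<lambda>P. if i = k then 1 else 0)" by (intro ext) (auto simp: G_def)
    show ?thesis unfolding e by (rule pf_const)
  qed
  have Gker: "G P *v u = 0 \<longleftrightarrow> (\<forall>j. j \<notin> S \<longrightarrow> u $ j = 0) \<and> (\<forall>j\<in>S. (\<Sum>y\<in>Y. v P j y * (\<Sum>l\<in>S. u $ l * v P l y)) = 0)"
    for P u
  proof -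
    have row: "(G P *v u) $ j = (if j \<in> S then (\<Sum>y\<in>Y. v P j y * (\<Sum>l\<in>S. u $ l * v P l y)) else u $ j)" for j
    proof (cases "j \<in> S")
      case True
      have "(G P *v u) $ j = (\<Sum>l\<in>UNIV. G P $ j $ l * u $ l)" by (simp add: matrix_vector_mult_def)
      also have "\<dots> = (\<Sum>l\<in>S. (\<Sum>y\<in>Y. v P j y * v P l y) * u $ l)"
        using True by (intro sum.mono_neutral_cong_right) (auto simp: G_def)
      also have "\<dots> = (\<Sum>l\<in>S. \<Sum>y\<in>Y. v P j y * (u $ l * v P l y))"
        by (simp add: sum_distrib_right sum_distrib_left mult_ac)
      also have "\<dots> = (\<Sum>y\<in>Y. \<Sum>l\<in>S. v P j y * (u $ l * v P l y))"
        by (rule sum.swap)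
      also have "\<dots> = (\<Sum>y\<in>Y. v P j y * (\<Sum>l\<in>S. u $ l * v P l y))"
        by (simp add: sum_distrib_left)
      finally show ?thesis using True by simp
    next
      case False
      have "(G P *v u) $ j = (\<Sum>l\<in>UNIV. G P $ j $ l * u $ l)" by (simp add: matrix_vector_mult_def)
      also have "\<dots> = G P $ j $ j * u $ j"
        by (rule sum_single) (use False in \<open>auto simp: G_def\<close>)
      also have "\<dots> = u $ j" using False by (simp add: G_def)
      finally show ?thesis using False by simp
    qed
    show ?thesis
      by (auto simp: vec_eq_iff row split: if_splits)
  qed
  have "det (G Pw) \<noteq> 0"
  proof (rule det_nz_kernel)
    fix u assume u: "G Pw *v u = 0"
    then have u1: "\<forall>j. j \<notin> S \<longrightarrow> u $ j = 0"
      and u2: "\<forall>j\<in>S. (\<Sum>y\<in>Y. v Pw j y * (\<Sum>l\<in>S. u $ l * v Pw l y)) = 0"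
      using Gker[of Pw u] by auto
    have "(\<Sum>y\<in>Y. (\<Sum>l\<in>S. u $ l * v Pw l y)^2) = (\<Sum>y\<in>Y. \<Sum>j\<in>S. u $ j * v Pw j y * (\<Sum>l\<in>S. u $ l * v Pw l y))"
      by (simp add: power2_eq_square sum_distrib_right)
    also have "\<dots> = (\<Sum>j\<in>S. \<Sum>y\<in>Y. u $ j * v Pw j y * (\<Sum>l\<in>S. u $ l * v Pw l y))"
      by (rule sum.swap)
    also have "\<dots> = (\<Sum>j\<in>S. u $ j * (\<Sum>y\<in>Y. v Pw j y * (\<Sum>l\<in>S. u $ l * v Pw l y)))"
      by (simp add: sum_distrib_left mult.assoc)
    also have "\<dots> = 0" using u2 by simp
    finally have "\<forall>y\<in>Y. (\<Sum>l\<in>S. u $ l * v Pw l y)^2 = 0"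
      using sum_nonneg_eq_0_iff[OF finY, of "\<lambda>y. (\<Sum>l\<in>S. u $ l * v Pw l y)^2"] by simp
    then have "\<forall>y\<in>Y. (\<Sum>l\<in>S. u $ l * v Pw l y) = 0" by simp
    then have "\<forall>j\<in>S. u $ j = 0" using wit[of "\<lambda>l. u $ l"] by simp
    then show "u = 0" using u1 by (auto simp: vec_eq_iff)
  qed
  then have null: "{P. det (G P) = 0} \<in> null_sets lebesgue"
    by (rule pfun_null[OF pf_det[OF pfG], rotated])
  have "{P. \<not> (\<forall>c. (\<forall>y\<in>Y. (\<Sum>j\<in>S. c j * v P j y) = 0) \<longrightarrow> (\<forall>j\<in>S. c j = 0))} \<subseteq> {P. det (G P) = 0}"
  proof
    fix P assume "P \<in> {P. \<not> (\<forall>c. (\<forall>y\<in>Y. (\<Sum>j\<in>S. c j * v P j y) = 0) \<longrightarrow> (\<forall>j\<in>S. c j = 0))}"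
    then obtain c j where c: "\<forall>y\<in>Y. (\<Sum>j\<in>S. c j * v P j y) = 0" and j: "j \<in> S" "c j \<noteq> 0" by blast
    show "P \<in> {P. det (G P) = 0}"
    proof (rule ccontr)
    assume "P \<notin> {P. det (G P) = 0}"
    then have d: "det (G P) \<noteq> 0" by simp
    define u :: "real^'j" where "u = (\<chi> l. if l \<in> S then c l else 0)"
    have "(\<Sum>l\<in>S. u $ l * v P l y) = (\<Sum>l\<in>S. c l * v P l y)" for y by (simp add: u_def)
    then have "G P *v u = 0" using Gker[of P u] c by (simp add: u_def)
    then have "u = 0" by (rule det_nz_kernelD[OF d])
    then have "u $ j = 0" by simp
    then show False using j by (simp add: u_def)
    qed
  qed
  then show ?thesis using null_sets_completion_subset null by blast
qed


lemma lagrange_zero: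
  fixes L :: "real set" and d :: "real \<Rightarrow> real"
  assumes finL: "finite L" and cL: "card L \<le> n" and z: "\<And>e. e < n \<Longrightarrow> (\<Sum>l\<in>L. d l * l^e) = 0"
    and l0: "l0 \<in> L"
  shows "d l0 = 0"
proof -
  define q where "q = (\<Prod>\<mu>\<in>L - {l0}. [:-\<mu>, 1:])"
  have pq: "poly q x = (\<Prod>\<mu>\<in>L - {l0}. x - \<mu>)" for x by (simp add: q_def poly_prod)
  have "degree q = (\<Sum>\<mu>\<in>L - {l0}. degree [:-\<mu>, 1::real:])"
    unfolding q_def by (rule degree_prod_sum_eq) simp
  also have "\<dots> = card (L - {l0})" by simp
  also have "\<dots> = card L - 1" using l0 finL by simp
  finally have dq: "degree q < n" using cL l0 finL
    by (metis card_gt_0_iff empty_iff diff_less less_le_trans not_less zero_less_one le_less_trans)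
  have "(\<Sum>l\<in>L. d l * poly q l) = d l0 * poly q l0"
  proof -
    have "(\<Sum>l\<in>L. d l * poly q l) = d l0 * poly q l0 + (\<Sum>l\<in>L - {l0}. d l * poly q l)"
      using finL l0 by (simp add: sum.remove)
    also have "(\<Sum>l\<in>L - {l0}. d l * poly q l) = 0"
    proof (rule sum.neutral, rule ballI)
      fix l assume l: "l \<in> L - {l0}"
      have "poly q l = 0" unfolding pq using l finL by (intro prod_zero) auto
      then show "d l * poly q l = 0" by simp
    qed
    finally show ?thesis by simp
  qed
  moreover have "(\<Sum>l\<in>L. d l * poly q l) = 0"
  proof -
    have "(\<Sum>l\<in>L. d l * poly q l) = (\<Sum>l\<in>L. \<Sum>e\<le>degree q. coeff q e * (d l * l^e))"
      by (simp add: poly_altdef sum_distrib_left mult_ac)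
    also have "\<dots> = (\<Sum>e\<le>degree q. \<Sum>l\<in>L. coeff q e * (d l * l^e))" by (rule sum.swap)
    also have "\<dots> = (\<Sum>e\<le>degree q. coeff q e * (\<Sum>l\<in>L. d l * l^e))" by (simp add: sum_distrib_left)
    also have "\<dots> = 0" using z dq by (intro sum.neutral) auto
    finally show ?thesis .
  qed
  moreover have "poly q l0 \<noteq> 0" unfolding pq using finL by (subst prod_zero_iff) auto
  ultimately show ?thesis by simp
qed

lemma polyfun_vanish:
  fixes K :: "nat \<Rightarrow> real"
  assumes z: "\<And>u::nat. u \<le> p \<Longrightarrow> (\<Sum>e\<le>p. K e * (real u)^e) = 0"
  shows "\<And>e. e \<le> p \<Longrightarrow> K e = 0"
proof (rule ccontr)
  fix e assume e: "e \<le> p" "K e \<noteq> 0"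
  then have "card {x::real. (\<Sum>e\<le>p. K e * x^e) = 0} \<le> p" by (intro polyfun_roots_card) auto
  moreover have "real ` {0..p} \<subseteq> {x::real. (\<Sum>e\<le>p. K e * x^e) = 0}" using z by auto
  then have "card (real ` {0..p}) \<le> card {x::real. (\<Sum>e\<le>p. K e * x^e) = 0}"
    by (intro card_mono) (use e in \<open>auto intro: polyfun_roots_finite\<close>)
  moreover have "card (real ` {0..p}) = p + 1" by (simp add: card_image)
  ultimately show False by simp
qed


definition sv :: "'d::finite \<Rightarrow> ('d \<times> nat) option \<Rightarrow> real^'d" where
  "sv i0 \<tau> = (case \<tau> of None \<Rightarrow> axis i0 1 | Some (i, l) \<Rightarrow> axis i0 1 + real l *\<^sub>R axis i 1)"

definition starIdx :: "'d::finite \<Rightarrow> nat \<Rightarrow> ('d \<times> nat) option set" where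
  "starIdx i0 p = insert None (Some ` ((UNIV - {i0}) \<times> {1..p}))"

definition ysamp :: "'d::finite \<Rightarrow> nat \<Rightarrow> (real^'d) set" where
  "ysamp i0 p = insert (axis i0 1) ((\<lambda>(i, u). axis i0 1 + real u *\<^sub>R axis i 1) ` ((UNIV - {i0}) \<times> {0..p}))"

definition Bc :: "'d \<Rightarrow> ('d \<times> nat) option \<Rightarrow> real" where
  "Bc i \<tau> = (case \<tau> of None \<Rightarrow> 0 | Some (i', l) \<Rightarrow> if i' = i then real l else 0)"

lemma finite_starIdx: "finite (starIdx i0 p)" by (simp add: starIdx_def)
lemma finite_ysamp: "finite (ysamp i0 p)" by (simp add: ysamp_def)

lemma card_starIdx: "card (starIdx (i0::'d::finite) p) = (CARD('d) - 1) * p + 1"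
proof -
  have "card (Some ` ((UNIV - {i0}) \<times> {1..p})) = card ((UNIV - {i0}) \<times> {1..p})"
    by (rule card_image) simp
  also have "\<dots> = (CARD('d) - 1) * p" by (simp add: card_cartesian_product)
  finally show ?thesis by (simp add: starIdx_def)
qed

lemma sv_inner_line:
  assumes "\<tau> \<in> starIdx i0 p" "i \<noteq> i0"
  shows "sv i0 \<tau> \<bullet> (axis i0 1 + u *\<^sub>R axis i 1) = 1 + Bc i \<tau> * u"
  using assms by (auto simp: sv_def starIdx_def Bc_def inner_add_left inner_add_right inner_axis_axis split: if_splits)

lemma sv_inner_e0:
  assumes "\<tau> \<in> starIdx i0 p"
  shows "sv i0 \<tau> \<bullet> axis i0 1 = 1"
  using assms by (auto simp: sv_def starIdx_def inner_add_left inner_axis_axis split: if_splits)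

lemma star_indep:
  fixes i0 :: "'d::finite" and c :: "('d \<times> nat) option \<Rightarrow> real"
  assumes T: "T \<subseteq> starIdx i0 p"
    and z: "\<forall>y\<in>ysamp i0 p. (\<Sum>\<tau>\<in>T. c \<tau> * (sv i0 \<tau> \<bullet> y)^p) = 0"
  shows "\<forall>\<tau>\<in>T. c \<tau> = 0"
proof -
  have finT: "finite T" using T finite_starIdx by (rule finite_subset)
  have some0: "c (Some (i, l)) = 0" if il: "Some (i, l) \<in> T" for i l
  proof -
    have i: "i \<noteq> i0" and l: "1 \<le> l" "l \<le> p" using il T by (auto simp: starIdx_def)
    have line: "(\<Sum>\<tau>\<in>T. c \<tau> * (1 + Bc i \<tau> * real u)^p) = 0" if u: "u \<le> p" for u
    proof -
      have "axis i0 1 + real u *\<^sub>R axis i 1 \<in> ysamp i0 p" using u i by (force simp: ysamp_def)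
      then have "(\<Sum>\<tau>\<in>T. c \<tau> * (sv i0 \<tau> \<bullet> (axis i0 1 + real u *\<^sub>R axis i 1))^p) = 0" using z by blast
      moreover have "sv i0 \<tau> \<bullet> (axis i0 1 + real u *\<^sub>R axis i 1) = 1 + Bc i \<tau> * real u" if "\<tau> \<in> T" for \<tau>
        using sv_inner_line[of \<tau> i0 p i "real u"] that T i by auto
      ultimately show ?thesis by simp
    qed
    define K where "K = (\<lambda>e. of_nat (p choose e) * (\<Sum>\<tau>\<in>T. c \<tau> * Bc i \<tau> ^ e))"
    have exp: "(\<Sum>\<tau>\<in>T. c \<tau> * (1 + Bc i \<tau> * x)^p) = (\<Sum>e\<le>p. K e * x^e)" for x :: real
    proof -
      have "(\<Sum>\<tau>\<in>T. c \<tau> * (1 + Bc i \<tau> * x)^p) = (\<Sum>\<tau>\<in>T. \<Sum>e\<le>p. c \<tau> * (of_nat (p choose e) * (Bc i \<tau> * x)^e))"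
      proof (rule sum.cong[OF refl])
        fix \<tau>
        have "(Bc i \<tau> * x + 1)^p = (\<Sum>e\<le>p. of_nat (p choose e) * (Bc i \<tau> * x)^e * 1^(p - e))"
          by (rule binomial_ring)
        then show "c \<tau> * (1 + Bc i \<tau> * x)^p = (\<Sum>e\<le>p. c \<tau> * (of_nat (p choose e) * (Bc i \<tau> * x)^e))"
          by (simp add: add.commute sum_distrib_left)
      qed
      also have "\<dots> = (\<Sum>e\<le>p. \<Sum>\<tau>\<in>T. c \<tau> * (of_nat (p choose e) * (Bc i \<tau> * x)^e))" by (rule sum.swap)
      also have "\<dots> = (\<Sum>e\<le>p. K e * x^e)"
        by (rule sum.cong[OF refl]) (simp add: K_def sum_distrib_left sum_distrib_right power_mult_distrib mult_ac)
      finally show ?thesis .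
    qed
    have K0: "K e = 0" if "e \<le> p" for e
      using polyfun_vanish[of p K e] line exp that by simp
    define Ls where "Ls = {l. Some (i, l) \<in> T}"
    have finLs: "finite Ls"
    proof -
      have "Ls \<subseteq> {1..p}" using T i by (auto simp: Ls_def starIdx_def)
      then show ?thesis by (rule finite_subset) simp
    qed
    have cLs: "card Ls \<le> p"
    proof -
      have "Ls \<subseteq> {1..p}" using T i by (auto simp: Ls_def starIdx_def)
      then have "card Ls \<le> card {1..p}" by (rule card_mono[rotated]) simp
      then show ?thesis by simp
    qed
    have powsum: "(\<Sum>\<tau>\<in>T. c \<tau> * Bc i \<tau> ^ e) = (\<Sum>l\<in>Ls. c (Some (i, l)) * real l ^ e)" if e1: "1 \<le> e" for e
    proof -
      have "(\<Sum>\<tau>\<in>T. c \<tau> * Bc i \<tau> ^ e) = (\<Sum>\<tau>\<in>(\<lambda>l. Some (i, l)) ` Ls. c \<tau> * Bc i \<tau> ^ e)"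
      proof (rule sum.mono_neutral_right[OF finT])
        show "(\<lambda>l. Some (i, l)) ` Ls \<subseteq> T" by (auto simp: Ls_def)
        show "\<forall>\<tau>\<in>T - (\<lambda>l. Some (i, l)) ` Ls. c \<tau> * Bc i \<tau> ^ e = 0"
        proof
          fix \<tau> assume \<tau>: "\<tau> \<in> T - (\<lambda>l. Some (i, l)) ` Ls"
          have "Bc i \<tau> = 0" using \<tau> by (auto simp: Bc_def Ls_def split: option.splits)
          then show "c \<tau> * Bc i \<tau> ^ e = 0" using e1 by simp
        qed
      qed
      also have "\<dots> = (\<Sum>l\<in>Ls. c (Some (i, l)) * Bc i (Some (i, l)) ^ e)"
        by (rule sum.reindex_cong[of "\<lambda>l. Some (i, l)"]) (auto simp: inj_on_def)
      also have "\<dots> = (\<Sum>l\<in>Ls. c (Some (i, l)) * real l ^ e)" by (simp add: Bc_def)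
      finally show ?thesis .
    qed
    define Lr where "Lr = real ` Ls"
    define d where "d = (\<lambda>x::real. c (Some (i, nat \<lfloor>x\<rfloor>)) * x)"
    have zz: "(\<Sum>x\<in>Lr. d x * x^e) = 0" if "e < p" for e
    proof -
      have "(\<Sum>x\<in>Lr. d x * x^e) = (\<Sum>l\<in>Ls. d (real l) * real l ^ e)"
        unfolding Lr_def by (simp add: sum.reindex inj_on_def)
      also have "\<dots> = (\<Sum>l\<in>Ls. c (Some (i, l)) * real l ^ (Suc e))" by (simp add: d_def mult.assoc)
      also have "\<dots> = (\<Sum>\<tau>\<in>T. c \<tau> * Bc i \<tau> ^ (Suc e))" by (rule powsum[symmetric]) simp
      also have "\<dots> = 0" using K0[of "Suc e"] that by (simp add: K_def)
      finally show ?thesis .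
    qed
    have "d (real l) = 0"
      by (rule lagrange_zero[of Lr p d]) (use finLs cLs zz il in \<open>auto simp: Lr_def Ls_def card_image_le intro: le_trans[OF card_image_le]\<close>)
    then show ?thesis using l by (simp add: d_def)
  qed
  show ?thesis
  proof
    fix \<tau> assume \<tau>T: "\<tau> \<in> T"
    show "c \<tau> = 0"
    proof (cases \<tau>)
      case (Some il)
      then show ?thesis using some0 \<tau>T by (cases il) auto
    next
      case None
      have "axis i0 1 \<in> ysamp i0 p" by (simp add: ysamp_def)
      then have "(\<Sum>\<tau>\<in>T. c \<tau> * (sv i0 \<tau> \<bullet> axis i0 1)^p) = 0" using z by blast
      moreover have "(\<Sum>\<tau>\<in>T. c \<tau> * (sv i0 \<tau> \<bullet> axis i0 1)^p) = (\<Sum>\<tau>\<in>T. c \<tau>)"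
      proof (rule sum.cong[OF refl])
        fix \<sigma> assume "\<sigma> \<in> T"
        then have "sv i0 \<sigma> \<bullet> axis i0 1 = 1" using T sv_inner_e0 by blast
        then show "c \<sigma> * (sv i0 \<sigma> \<bullet> axis i0 1)^p = c \<sigma>" by simp
      qed
      moreover have "(\<Sum>\<tau>\<in>T. c \<tau>) = c None"
      proof -
        have "(\<Sum>\<tau>\<in>T. c \<tau>) = c None + (\<Sum>\<tau>\<in>T - {None}. c \<tau>)"
          using finT None \<tau>T by (simp add: sum.remove)
        also have "(\<Sum>\<tau>\<in>T - {None}. c \<tau>) = 0"
        proof (rule sum.neutral, rule ballI)
          fix \<sigma> assume "\<sigma> \<in> T - {None}"
          then obtain i l where "\<sigma> = Some (i, l)" "Some (i, l) \<in> T" by (cases \<sigma>) auto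
          then show "c \<sigma> = 0" using some0 by simp
        qed
        finally show ?thesis by simp
      qed
      ultimately show ?thesis using None by simp
    qed
  qed
qed


lemma nullA:
  fixes S :: "'d1::finite set"
  assumes cS: "card S \<le> CARD('d2::finite)"
  shows "{P :: (real^'d0::finite^'d1) \<times> (real^'d1^'d2).
           \<not> (\<forall>c. (\<forall>k\<in>UNIV. (\<Sum>j\<in>S. c j * snd P $ k $ j) = 0) \<longrightarrow> (\<forall>j\<in>S. c j = 0))} \<in> null_sets lebesgue"
proof -
  obtain \<iota> :: "'d1 \<Rightarrow> 'd2" where \<iota>: "inj_on \<iota> S"
    using card_le_inj[of S "UNIV :: 'd2 set"] cS by auto
  define W2 :: "real^'d1^'d2" where "W2 = (\<chi> k j. if j \<in> S \<and> k = \<iota> j then 1 else 0)"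
  define P0 :: "(real^'d0^'d1) \<times> (real^'d1^'d2)" where "P0 = (0, W2)"
  show ?thesis
  proof (rule generic_indep[where v = "\<lambda>P j k. snd P $ k $ j" and Pw = P0])
    fix j :: 'd1 and k :: 'd2
    show "(\<lambda>P :: (real^'d0^'d1) \<times> (real^'d1^'d2). snd P $ k $ j) \<in> pfun"
      by (rule pf_lin, rule linearI) auto
  next
    show "finite (UNIV :: 'd2 set)" by simp
  next
    fix c assume c: "\<forall>y\<in>UNIV. (\<Sum>j\<in>S. c j * snd P0 $ y $ j) = 0"
    show "\<forall>j\<in>S. c j = 0"
    proof
      fix j0 assume j0: "j0 \<in> S"
      have "(\<Sum>j\<in>S. c j * snd P0 $ \<iota> j0 $ j) = c j0"
      proof -
        have "(\<Sum>j\<in>S. c j * snd P0 $ \<iota> j0 $ j) = (\<Sum>j\<in>S. if j = j0 then c j else 0)"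
          using \<iota> j0 by (intro sum.cong) (auto simp: P0_def W2_def inj_on_def)
        also have "\<dots> = c j0" using j0 by simp
        finally show ?thesis .
      qed
      then show "c j0 = 0" using c by simp
    qed
  qed
qed

lemma nullB:
  fixes S :: "'d1::finite set" and i0 :: "'d0::finite"
  assumes cS: "card S \<le> (CARD('d0) - 1) * p + 1"
  shows "{P :: (real^'d0^'d1) \<times> (real^'d1^'d2::finite).
           \<not> (\<forall>c. (\<forall>y\<in>ysamp i0 p. (\<Sum>j\<in>S. c j * (fst P $ j \<bullet> y)^p) = 0) \<longrightarrow> (\<forall>j\<in>S. c j = 0))} \<in> null_sets lebesgue"
proof -
  have "card S \<le> card (starIdx i0 p)" using cS card_starIdx[of i0 p] by simp
  then obtain \<iota> where \<iota>: "\<iota> ` S \<subseteq> starIdx i0 p" "inj_on \<iota> S"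
    using card_le_inj[of S "starIdx i0 p"] finite_starIdx by auto
  define W1 :: "real^'d0^'d1" where "W1 = (\<chi> j. if j \<in> S then sv i0 (\<iota> j) else 0)"
  define P0 :: "(real^'d0^'d1) \<times> (real^'d1^'d2)" where "P0 = (W1, 0)"
  show ?thesis
  proof (rule generic_indep[where v = "\<lambda>P j y. (fst P $ j \<bullet> y)^p" and Pw = P0])
    fix j :: 'd1 and y :: "real^'d0"
    have "(\<lambda>P :: (real^'d0^'d1) \<times> (real^'d1^'d2). fst P $ j \<bullet> y) \<in> pfun"
      by (rule pf_lin, rule linearI) (auto simp: inner_add_left)
    then show "(\<lambda>P :: (real^'d0^'d1) \<times> (real^'d1^'d2). (fst P $ j \<bullet> y)^p) \<in> pfun" by (rule pf_pow)
  next
    show "finite (ysamp i0 p)" by (rule finite_ysamp)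
  next
    fix c assume c: "\<forall>y\<in>ysamp i0 p. (\<Sum>j\<in>S. c j * (fst P0 $ j \<bullet> y)^p) = 0"
    define c' where "c' = (\<lambda>\<tau>. c (the_inv_into S \<iota> \<tau>))"
    have "\<forall>y\<in>ysamp i0 p. (\<Sum>\<tau>\<in>\<iota> ` S. c' \<tau> * (sv i0 \<tau> \<bullet> y)^p) = 0"
    proof
      fix y assume y: "y \<in> ysamp i0 p"
      have "(\<Sum>\<tau>\<in>\<iota> ` S. c' \<tau> * (sv i0 \<tau> \<bullet> y)^p) = (\<Sum>j\<in>S. c' (\<iota> j) * (sv i0 (\<iota> j) \<bullet> y)^p)"
        by (rule sum.reindex[OF \<iota>(2), unfolded comp_def])
      also have "\<dots> = (\<Sum>j\<in>S. c j * (fst P0 $ j \<bullet> y)^p)"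
        using \<iota>(2) by (intro sum.cong) (auto simp: c'_def P0_def W1_def the_inv_into_f_f)
      also have "\<dots> = 0" using c y by blast
      finally show "(\<Sum>\<tau>\<in>\<iota> ` S. c' \<tau> * (sv i0 \<tau> \<bullet> y)^p) = 0" .
    qed
    then have "\<forall>\<tau>\<in>\<iota> ` S. c' \<tau> = 0" by (rule star_indep[OF \<iota>(1)])
    then show "\<forall>j\<in>S. c j = 0" using \<iota>(2) by (auto simp: c'_def the_inv_into_f_f)
  qed
qed


lemma par_lemma:
  fixes u w :: "'a::real_inner"
  assumes p: "1 \<le> p" and w: "w \<noteq> 0" and eq: "\<And>y. (u \<bullet> y)^p = \<beta> * (w \<bullet> y)^p"
  shows "\<exists>t. u = t *\<^sub>R w \<and> \<beta> = t^p"
proof -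
  define t where "t = (u \<bullet> w) / (w \<bullet> w)"
  define z where "z = u - t *\<^sub>R w"
  have ww: "w \<bullet> w \<noteq> 0" using w by simp
  have wz: "w \<bullet> z = 0" using ww by (simp add: z_def t_def inner_diff_right inner_commute)
  have "(u \<bullet> z)^p = 0" using eq[of z] wz p by (simp add: inner_commute)
  then have uz: "u \<bullet> z = 0" by simp
  have "z \<bullet> z = u \<bullet> z - t * (w \<bullet> z)" by (simp add: z_def inner_diff_left)
  then have "z \<bullet> z = 0" using uz wz by simp
  then have "z = 0" by simp
  then have ut: "u = t *\<^sub>R w" by (simp add: z_def)
  have "(t * (w \<bullet> w))^p = \<beta> * (w \<bullet> w)^p" using eq[of w] ut by simp
  then have "t^p * (w \<bullet> w)^p = \<beta> * (w \<bullet> w)^p" by (simp add: power_mult_distrib)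
  then have "\<beta> = t^p" using ww by simp
  then show ?thesis using ut by blast
qed

lemma matrix_inv_eq:
  fixes A B :: "real^'n^'n"
  assumes "A ** B = mat 1" "B ** A = mat 1"
  shows "matrix_inv A = B"
proof -
  have uniq: "A' = B" if "A ** A' = mat 1 \<and> A' ** A = mat 1" for A'
  proof -
    have "A' = A' ** (A ** B)" using assms by simp
    also have "\<dots> = (A' ** A) ** B" by (simp add: matrix_mul_assoc)
    also have "\<dots> = B" using that by simp
    finally show ?thesis .
  qed
  have "A ** matrix_inv A = mat 1 \<and> matrix_inv A ** A = mat 1"
    unfolding matrix_inv_def by (rule someI[of _ B]) (use assms in simp)
  then show ?thesis by (rule uniq)
qed

definition diagm :: "('n \<Rightarrow> real) \<Rightarrow> real^'n^'n" where
  "diagm d = (\<chi> i j. if i = j then d i else 0)"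

lemma mult_diagm_right: "(A ** diagm d) $ k $ j = A $ k $ j * d (j::'n::finite)"
proof -
  have "(A ** diagm d) $ k $ j = (\<Sum>l\<in>UNIV. A $ k $ l * (if l = j then d l else 0))"
    by (simp add: diagm_def matrix_matrix_mult_def)
  also have "\<dots> = A $ k $ j * d j" by (subst sum_single[of j]) auto
  finally show ?thesis .
qed

lemma diagm_mult: "diagm d ** diagm e = diagm (\<lambda>i. d i * e (i::'n::finite))"
  by (simp add: vec_eq_iff mult_diagm_right) (simp add: diagm_def)

lemma diagm_one: "diagm (\<lambda>_. 1) = mat 1"
  by (simp add: diagm_def mat_def vec_eq_iff)

lemma matpow_diagm: "matpow (diagm d) k = diagm (\<lambda>i. d i ^ k)"
proof (induction k)
  case 0 then show ?case by (simp add: diagm_one)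
next
  case (Suc k) then show ?case by (simp add: diagm_mult)
qed

lemma ceil_arith:
  fixes d0 d1 d2 r :: nat
  assumes "2 \<le> d0" "2 \<le> d1" "2 \<le> d2"
    and "real r \<ge> 2 * real_of_int \<lceil>(2 * real d1 - real (min d1 d2)) / (2 * real (min d1 d0) - 2)\<rceil>"
  shows "2 * d1 + 2 \<le> min d1 d2 + 2 * min d1 ((d0 - 1) * (r div 2) + 1)"
proof -
  define m where "m = min d1 d2"
  define m0 where "m0 = min d1 d0"
  define X where "X = (2 * real d1 - real m) / (2 * real m0 - 2)"
  define p where "p = r div 2"
  have m2: "2 \<le> m" "2 \<le> m0" using assms by (auto simp: m_def m0_def)
  have "2 * \<lceil>X\<rceil> \<le> int r" using assms(4) unfolding X_def m_def m0_def by linarith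
  then have "\<lceil>X\<rceil> \<le> int p" unfolding p_def by linarith
  then have "X \<le> real p" by linarith
  then have "2 * real d1 - real m \<le> real p * (2 * real m0 - 2)"
    using m2 unfolding X_def by (simp add: divide_le_eq)
  then have A: "2 * real d1 \<le> real m + 2 * real p * (real m0 - 1)" by (simp add: algebra_simps)
  have "real m0 - 1 \<le> real d0 - 1" by (simp add: m0_def)
  then have "2 * real p * (real m0 - 1) \<le> 2 * real p * (real d0 - 1)" by (intro mult_left_mono) auto
  with A have "2 * real d1 \<le> real m + 2 * ((real d0 - 1) * real p)" by (simp add: algebra_simps)
  moreover have e: "real (d0 - 1) = real d0 - 1" using assms(1) by (simp add: of_nat_diff)
  moreover have "real (m + 2 * ((d0 - 1) * p)) = real m + 2 * ((real d0 - 1) * real p)"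
    by (simp only: of_nat_add of_nat_mult e of_nat_numeral)
  ultimately have "real (2 * d1) \<le> real (m + 2 * ((d0 - 1) * p))" by simp
  then have "2 * d1 \<le> m + 2 * ((d0 - 1) * p)" by (simp only: of_nat_le_iff)
  then show ?thesis using m2 unfolding m_def[symmetric] p_def[symmetric] by (simp add: min_def)
qed


definition permm :: "('n \<Rightarrow> 'n) \<Rightarrow> real^'n^'n" where
  "permm \<pi> = (\<chi> i j. if j = \<pi> i then 1 else 0)"

lemma permm_mult_row: "(permm \<pi> ** M) $ i = M $ (\<pi> i :: 'n::finite)"
proof -
  have "(permm \<pi> ** M) $ i $ l = M $ (\<pi> i) $ l" for l
  proof -
    have "(permm \<pi> ** M) $ i $ l = (\<Sum>k\<in>UNIV. (if k = \<pi> i then 1 else 0) * M $ k $ l)"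
      by (simp add: permm_def matrix_matrix_mult_def)
    also have "\<dots> = M $ (\<pi> i) $ l" by (subst sum_single[of "\<pi> i"]) auto
    finally show ?thesis .
  qed
  then show ?thesis by (simp add: vec_eq_iff)
qed

lemma diagm_mult_row: "(diagm d ** M) $ i = d i *\<^sub>R M $ (i :: 'n::finite)"
proof -
  have "(diagm d ** M) $ i $ l = d i * M $ i $ l" for l
  proof -
    have "(diagm d ** M) $ i $ l = (\<Sum>k\<in>UNIV. (if i = k then d i else 0) * M $ k $ l)"
      by (simp add: diagm_def matrix_matrix_mult_def)
    also have "\<dots> = d i * M $ i $ l" by (subst sum_single[of i]) auto
    finally show ?thesis .
  qed
  then show ?thesis by (simp add: vec_eq_iff)
qed

lemma mult_transpose_permm: "(M ** transpose (permm \<pi>)) $ k $ j = M $ k $ (\<pi> j :: 'n::finite)"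
proof -
  have "(M ** transpose (permm \<pi>)) $ k $ j = (\<Sum>b\<in>UNIV. M $ k $ b * (if b = \<pi> j then 1 else 0))"
    by (simp add: permm_def matrix_matrix_mult_def transpose_def)
  also have "\<dots> = M $ k $ (\<pi> j)" by (subst sum_single[of "\<pi> j"]) auto
  finally show ?thesis .
qed

lemma bij_permutes_UNIV: "bij \<pi> \<Longrightarrow> \<pi> permutes UNIV"
  unfolding permutes_def by (auto simp: bij_iff)

lemma hpnn2_comp: "hpnn2 W1 W2 r x $ k = (\<Sum>j\<in>UNIV. W2 $ k $ j * (W1 $ j \<bullet> x)^r)"
  by (simp add: hpnn2_def rho_def matrix_vector_mult_def matrix_vector_mul_component[symmetric])

lemma inner_col: "(\<chi> k. W $ k $ j) \<bullet> (u::real^'k::finite) = (\<Sum>k\<in>UNIV. W $ k $ j * u $ k)"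
  by (simp add: inner_vec_def)


lemma core_unique:
  fixes W1 W1' :: "real^'d0::finite^'d1::finite" and W2 W2' :: "real^'d1^'d2::finite"
  assumes same: "hpnn2 W1' W2' r = hpnn2 W1 W2 r"
    and p1: "1 \<le> p" "p \<le> q" "p + q = r"
    and krA0: "\<And>S c. card S \<le> m \<Longrightarrow> (\<forall>k. (\<Sum>j\<in>S. c j * W2 $ k $ j) = 0) \<Longrightarrow> (\<forall>j\<in>S. c j = 0)"
    and krB0: "\<And>S c. card S \<le> KB \<Longrightarrow> (\<forall>y. (\<Sum>j\<in>S. c j * (W1 $ j \<bullet> y)^p) = 0) \<Longrightarrow> (\<forall>j\<in>S. c j = 0)"
    and krC0: "\<And>S c. card S \<le> KB \<Longrightarrow> (\<forall>y. (\<Sum>j\<in>S. c j * (W1 $ j \<bullet> y)^q) = 0) \<Longrightarrow> (\<forall>j\<in>S. c j = 0)"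
    and ineq: "2 * CARD('d1) + 2 \<le> m + KB + KB" "m \<le> CARD('d1)" "KB \<le> CARD('d1)" "1 \<le> KB"
  shows "hpnn2_equiv r W1' W2' W1 W2"
proof -
  have F1: "(\<Sum>j\<in>UNIV. W2 $ k $ j * (W1 $ j \<bullet> x)^r) = (\<Sum>j\<in>UNIV. W2' $ k $ j * (W1' $ j \<bullet> x)^r)" for k x
    using arg_cong[OF fun_cong[OF same, of x], of "\<lambda>v. v $ k"] by (simp add: hpnn2_comp)
  have F2: "(\<Sum>j\<in>UNIV. W2 $ k $ j * (W1 $ j \<bullet> y)^p * (W1 $ j \<bullet> z)^q)
          = (\<Sum>j\<in>UNIV. W2' $ k $ j * (W1' $ j \<bullet> y)^p * (W1' $ j \<bullet> z)^q)" for k y z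
    by (rule polar[where c = "\<lambda>j. W2 $ k $ j" and w = "\<lambda>j. W1 $ j" and c' = "\<lambda>j. W2' $ k $ j"
          and w' = "\<lambda>j. W1' $ j" and r = r]) (use F1 p1 in auto)
  define a :: "'d1 \<Rightarrow> real^'d2" where "a = (\<lambda>j. \<chi> k. W2 $ k $ j)"
  define ab :: "'d1 \<Rightarrow> real^'d2" where "ab = (\<lambda>j. \<chi> k. W2' $ k $ j)"
  define bF :: "'d1 \<Rightarrow> real^'d0 \<Rightarrow> real" where "bF = (\<lambda>j y. (W1 $ j \<bullet> y)^p)"
  define bbF :: "'d1 \<Rightarrow> real^'d0 \<Rightarrow> real" where "bbF = (\<lambda>j y. (W1' $ j \<bullet> y)^p)"
  define cF :: "'d1 \<Rightarrow> real^'d0 \<Rightarrow> real" where "cF = (\<lambda>j y. (W1 $ j \<bullet> y)^q)"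
  define ccF :: "'d1 \<Rightarrow> real^'d0 \<Rightarrow> real" where "ccF = (\<lambda>j y. (W1' $ j \<bullet> y)^q)"
  have I1: "(\<Sum>j\<in>UNIV. (a j \<bullet> u) * bF j y * cF j z) = (\<Sum>j\<in>UNIV. (ab j \<bullet> u) * bbF j y * ccF j z)" for u y z
  proof -
    have "(\<Sum>j\<in>UNIV. (a j \<bullet> u) * bF j y * cF j z) = (\<Sum>j\<in>UNIV. \<Sum>k\<in>UNIV. u $ k * (W2 $ k $ j * (W1 $ j \<bullet> y)^p * (W1 $ j \<bullet> z)^q))"
      by (simp add: a_def bF_def cF_def inner_col sum_distrib_left sum_distrib_right mult_ac)
    also have "\<dots> = (\<Sum>k\<in>UNIV. u $ k * (\<Sum>j\<in>UNIV. W2 $ k $ j * (W1 $ j \<bullet> y)^p * (W1 $ j \<bullet> z)^q))"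
      by (subst sum.swap) (simp add: sum_distrib_left)
    also have "\<dots> = (\<Sum>k\<in>UNIV. u $ k * (\<Sum>j\<in>UNIV. W2' $ k $ j * (W1' $ j \<bullet> y)^p * (W1' $ j \<bullet> z)^q))"
      by (simp add: F2)
    also have "\<dots> = (\<Sum>j\<in>UNIV. \<Sum>k\<in>UNIV. u $ k * (W2' $ k $ j * (W1' $ j \<bullet> y)^p * (W1' $ j \<bullet> z)^q))"
      by (subst sum.swap) (simp add: sum_distrib_left)
    also have "\<dots> = (\<Sum>j\<in>UNIV. (ab j \<bullet> u) * bbF j y * ccF j z)"
      by (simp add: ab_def bbF_def ccF_def inner_col sum_distrib_left sum_distrib_right mult_ac)
    finally show ?thesis .
  qed
  define Xb where "Xb = range bF \<union> range bbF"
  define Xc where "Xc = range cF \<union> range ccF"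
  have cardX: "card (range f \<union> range g) \<le> CARD('d1 + 'd1)" for f g :: "'d1 \<Rightarrow> real^'d0 \<Rightarrow> real"
  proof -
    have "card (range f \<union> range g) \<le> card (range f) + card (range g)" by (rule card_Un_le)
    also have "\<dots> \<le> CARD('d1) + CARD('d1)" by (intro add_mono card_image_le) simp_all
    finally show ?thesis by (simp add: card_sum)
  qed
  have cXb: "card Xb \<le> CARD('d1 + 'd1)" using cardX[of bF bbF] by (simp add: Xb_def)
  have cXc: "card Xc \<le> CARD('d1 + 'd1)" using cardX[of cF ccF] by (simp add: Xc_def)
  obtain Eb :: "(real^'d0 \<Rightarrow> real) \<Rightarrow> real^('d1 + 'd1)" where Eb: "linear Eb" "inj_on Eb (span Xb)"
    using transport[where 'n="'d1 + 'd1", OF _ cXb] by (auto simp: Xb_def)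
  obtain Ec :: "(real^'d0 \<Rightarrow> real) \<Rightarrow> real^('d1 + 'd1)" where Ec: "linear Ec" "inj_on Ec (span Xc)"
    using transport[where 'n="'d1 + 'd1", OF _ cXc] by (auto simp: Xc_def)
  have I2: "(\<Sum>j\<in>UNIV. (a j \<bullet> u) * (Eb (bF j) \<bullet> v) * cF j z) = (\<Sum>j\<in>UNIV. (ab j \<bullet> u) * (Eb (bbF j) \<bullet> v) * ccF j z)" for u v z
  proof -
    have fe: "(\<Sum>j\<in>UNIV. ((a j \<bullet> u) * cF j z) *\<^sub>R bF j) = (\<Sum>j\<in>UNIV. ((ab j \<bullet> u) * ccF j z) *\<^sub>R bbF j)"
    proof
      fix y
      show "(\<Sum>j\<in>UNIV. ((a j \<bullet> u) * cF j z) *\<^sub>R bF j) y = (\<Sum>j\<in>UNIV. ((ab j \<bullet> u) * ccF j z) *\<^sub>R bbF j) y"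
        using I1[of u y z] by (simp add: sum_fun_apply scaleR_fun_apply mult_ac)
    qed
    have "Eb (\<Sum>j\<in>UNIV. ((a j \<bullet> u) * cF j z) *\<^sub>R bF j) \<bullet> v = Eb (\<Sum>j\<in>UNIV. ((ab j \<bullet> u) * ccF j z) *\<^sub>R bbF j) \<bullet> v"
      using fe by simp
    then show ?thesis
      by (simp add: linear_sum[OF Eb(1)] linear_cmul[OF Eb(1)] inner_sum_left mult_ac)
  qed
  have TI: "\<forall>u v w. (\<Sum>j\<in>UNIV. (a j \<bullet> u) * (Eb (bF j) \<bullet> v) * (Ec (cF j) \<bullet> w)) = (\<Sum>j\<in>UNIV. (ab j \<bullet> u) * (Eb (bbF j) \<bullet> v) * (Ec (ccF j) \<bullet> w))"
  proof (intro allI)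
    fix u v w
    have fe: "(\<Sum>j\<in>UNIV. ((a j \<bullet> u) * (Eb (bF j) \<bullet> v)) *\<^sub>R cF j) = (\<Sum>j\<in>UNIV. ((ab j \<bullet> u) * (Eb (bbF j) \<bullet> v)) *\<^sub>R ccF j)"
    proof
      fix z
      show "(\<Sum>j\<in>UNIV. ((a j \<bullet> u) * (Eb (bF j) \<bullet> v)) *\<^sub>R cF j) z = (\<Sum>j\<in>UNIV. ((ab j \<bullet> u) * (Eb (bbF j) \<bullet> v)) *\<^sub>R ccF j) z"
        using I2[of u v z] by (simp add: sum_fun_apply scaleR_fun_apply mult_ac)
    qed
    have "Ec (\<Sum>j\<in>UNIV. ((a j \<bullet> u) * (Eb (bF j) \<bullet> v)) *\<^sub>R cF j) \<bullet> w = Ec (\<Sum>j\<in>UNIV. ((ab j \<bullet> u) * (Eb (bbF j) \<bullet> v)) *\<^sub>R ccF j) \<bullet> w"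
      using fe by simp
    then show "(\<Sum>j\<in>UNIV. (a j \<bullet> u) * (Eb (bF j) \<bullet> v) * (Ec (cF j) \<bullet> w)) = (\<Sum>j\<in>UNIV. (ab j \<bullet> u) * (Eb (bbF j) \<bullet> v) * (Ec (ccF j) \<bullet> w))"
      by (simp add: linear_sum[OF Ec(1)] linear_cmul[OF Ec(1)] inner_sum_left mult_ac)
  qed
  have krA: "kr m a"
    unfolding kr_def
  proof (intro allI impI)
    fix S c assume S: "finite S" "card S \<le> m" and z: "(\<Sum>r\<in>S. c r *\<^sub>R a r) = 0"
    have "\<forall>k. (\<Sum>j\<in>S. c j * W2 $ k $ j) = 0"
    proof
      fix k
      have "(\<Sum>r\<in>S. c r *\<^sub>R a r) $ k = 0" using z by simp
      then show "(\<Sum>j\<in>S. c j * W2 $ k $ j) = 0" by (simp add: a_def sum_component)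
    qed
    then show "\<forall>r\<in>S. c r = 0" using krA0[OF S(2)] by blast
  qed
  have krBf: "kr KB bF"
    unfolding kr_fun_iff
  proof (intro allI impI)
    fix S c assume S: "finite S" "card S \<le> KB" and z: "\<forall>y. (\<Sum>r\<in>S. c r * bF r y) = 0"
    then show "\<forall>r\<in>S. c r = 0" using krB0[OF S(2), of c] by (simp add: bF_def)
  qed
  have krCf: "kr KB cF"
    unfolding kr_fun_iff
  proof (intro allI impI)
    fix S c assume S: "finite S" "card S \<le> KB" and z: "\<forall>y. (\<Sum>r\<in>S. c r * cF r y) = 0"
    then show "\<forall>r\<in>S. c r = 0" using krC0[OF S(2), of c] by (simp add: cF_def)
  qed
  have krB: "kr KB (\<lambda>j. Eb (bF j))" by (rule kr_transport[OF krBf Eb]) (simp add: Xb_def)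
  have krC: "kr KB (\<lambda>j. Ec (cF j))" by (rule kr_transport[OF krCf Ec]) (simp add: Xc_def)
  obtain \<pi> where \<pi>: "bij \<pi>"
    and fac: "\<forall>j. \<exists>\<alpha> \<beta> \<gamma>. ab j = \<alpha> *\<^sub>R a (\<pi> j) \<and> Eb (bbF j) = \<beta> *\<^sub>R Eb (bF (\<pi> j))
                 \<and> Ec (ccF j) = \<gamma> *\<^sub>R Ec (cF (\<pi> j)) \<and> \<alpha> * \<beta> * \<gamma> = 1"
    using kruskal[OF TI krA krB krC ineq(2,3,3)] ineq(1) by auto
  have q1: "1 \<le> q" using p1 by simp
  have perj: "\<exists>t. t \<noteq> 0 \<and> W1' $ j = t *\<^sub>R W1 $ (\<pi> j) \<and> (\<forall>k. W2' $ k $ j = W2 $ k $ (\<pi> j) / t ^ r)" for j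
  proof -
    obtain \<alpha> \<beta> \<gamma> where f: "ab j = \<alpha> *\<^sub>R a (\<pi> j)" "Eb (bbF j) = \<beta> *\<^sub>R Eb (bF (\<pi> j))"
      "Ec (ccF j) = \<gamma> *\<^sub>R Ec (cF (\<pi> j))" "\<alpha> * \<beta> * \<gamma> = 1" using fac by blast
    have bb: "bbF j = \<beta> *\<^sub>R bF (\<pi> j)"
    proof (rule inj_onD[OF Eb(2)])
      show "Eb (bbF j) = Eb (\<beta> *\<^sub>R bF (\<pi> j))" using f(2) linear_cmul[OF Eb(1)] by simp
      show "bbF j \<in> span Xb" by (rule span_base) (simp add: Xb_def)
      show "\<beta> *\<^sub>R bF (\<pi> j) \<in> span Xb" by (intro span_scale span_base) (simp add: Xb_def)
    qed
    have cc: "ccF j = \<gamma> *\<^sub>R cF (\<pi> j)"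
    proof (rule inj_onD[OF Ec(2)])
      show "Ec (ccF j) = Ec (\<gamma> *\<^sub>R cF (\<pi> j))" using f(3) linear_cmul[OF Ec(1)] by simp
      show "ccF j \<in> span Xc" by (rule span_base) (simp add: Xc_def)
      show "\<gamma> *\<^sub>R cF (\<pi> j) \<in> span Xc" by (intro span_scale span_base) (simp add: Xc_def)
    qed
    have w: "W1 $ (\<pi> j) \<noteq> 0"
    proof
      assume "W1 $ (\<pi> j) = 0"
      then have "bF (\<pi> j) = 0" using p1(1) by (simp add: bF_def fun_eq_iff)
      then show False using kr_nonzero[OF krBf ineq(4)] by blast
    qed
    have eqp: "(W1' $ j \<bullet> y)^p = \<beta> * (W1 $ (\<pi> j) \<bullet> y)^p" for y
      using fun_cong[OF bb, of y] by (simp add: bF_def bbF_def scaleR_fun_apply)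
    have eqq: "(W1' $ j \<bullet> y)^q = \<gamma> * (W1 $ (\<pi> j) \<bullet> y)^q" for y
      using fun_cong[OF cc, of y] by (simp add: cF_def ccF_def scaleR_fun_apply)
    obtain t where t: "W1' $ j = t *\<^sub>R W1 $ (\<pi> j)" "\<beta> = t^p" using par_lemma[OF p1(1) w eqp] by blast
    obtain t' where t': "W1' $ j = t' *\<^sub>R W1 $ (\<pi> j)" "\<gamma> = t'^q" using par_lemma[OF q1 w eqq] by blast
    have "t = t'" using t(1) t'(1) w by (simp add: scaleR_cancel_right)
    then have "\<alpha> * t ^ r = 1" using f(4) t(2) t'(2) p1(3)[symmetric] by (simp add: power_add mult.assoc)
    moreover have "r \<noteq> 0" using p1 by simp
    ultimately have tnz: "t \<noteq> 0"
    proof -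
      assume a1: "\<alpha> * t ^ r = 1" and a2: "r \<noteq> 0"
      show "t \<noteq> 0"
      proof
        assume "t = 0" then have h: "t ^ r = 0" using a2 by (simp add: power_0_left)
        have "\<alpha> * t ^ r = \<alpha> * 0" unfolding h ..
        then show False using a1 by simp
      qed
    qed
    then have "t ^ r \<noteq> 0" by simp
    then have al: "\<alpha> = 1 / t ^ r" using \<open>\<alpha> * t ^ r = 1\<close> by (simp add: eq_divide_eq)
    have "W2' $ k $ j = W2 $ k $ (\<pi> j) / t ^ r" for k
    proof -
      have "ab j $ k = \<alpha> * a (\<pi> j) $ k" using f(1) by simp
      then show ?thesis by (simp add: ab_def a_def al)
    qed
    then show ?thesis using tnz t(1) by blast
  qed
  have ex: "\<forall>j. \<exists>t. t \<noteq> 0 \<and> W1' $ j = t *\<^sub>R W1 $ (\<pi> j) \<and> (\<forall>k. W2' $ k $ j = W2 $ k $ (\<pi> j) / t ^ r)"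
    using perj by blast
  obtain t where t: "\<forall>j. t j \<noteq> 0 \<and> W1' $ j = t j *\<^sub>R W1 $ (\<pi> j) \<and> (\<forall>k. W2' $ k $ j = W2 $ k $ (\<pi> j) / t j ^ r)"
    using choice[OF ex] by blast
  define dd where "dd = (\<lambda>i. t (inv \<pi> i))"
  have ddpi: "dd (\<pi> i) = t i" for i using \<pi> by (simp add: dd_def bij_def inv_f_f)
  have ddnz: "dd i \<noteq> 0" for i using t by (simp add: dd_def)
  define Dinv where "Dinv = diagm (\<lambda>i. 1 / dd i)"
  have D1: "diagm dd ** Dinv = mat 1" and D2: "Dinv ** diagm dd = mat 1"
  proof -
    have "(\<lambda>i. dd i * (1 / dd i)) = (\<lambda>_. 1)" "(\<lambda>i. 1 / dd i * dd i) = (\<lambda>_. 1)" using ddnz by auto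
    then show "diagm dd ** Dinv = mat 1" "Dinv ** diagm dd = mat 1"
      by (simp_all add: Dinv_def diagm_mult diagm_one)
  qed
  have minv: "matrix_inv (diagm dd) = Dinv" by (rule matrix_inv_eq[OF D1 D2])
  have H1: "is_perm_matrix (permm \<pi>)" unfolding is_perm_matrix_def permm_def
    by (intro exI[of _ \<pi>]) (simp add: bij_permutes_UNIV[OF \<pi>])
  have H2: "is_diag_matrix (diagm dd)" by (simp add: is_diag_matrix_def diagm_def)
  have H3: "invertible (diagm dd)" unfolding invertible_def using D1 D2 by blast
  have H4: "W1' = permm \<pi> ** diagm dd ** W1"
  proof -
    have "(permm \<pi> ** (diagm dd ** W1)) $ i = W1' $ i" for i
      using t by (simp add: permm_mult_row diagm_mult_row ddpi)
    then show ?thesis by (simp add: matrix_mul_assoc vec_eq_iff)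
  qed
  have H5: "W2' = W2 ** matpow (matrix_inv (diagm dd)) r ** transpose (permm \<pi>)"
  proof -
    have "(W2 ** diagm (\<lambda>i. (1 / dd i) ^ r) ** transpose (permm \<pi>)) $ k $ j = W2' $ k $ j" for k j
      using t by (simp add: mult_transpose_permm mult_diagm_right ddpi power_one_over)
    then show ?thesis by (simp add: minv Dinv_def matpow_diagm vec_eq_iff)
  qed
  show ?thesis unfolding hpnn2_equiv_def using H1 H2 H3 H4 H5 by blast
qed

theorem mainTheorem3:
  assumes "CARD('d0::finite) \<ge> 2" and "CARD('d1::finite) \<ge> 2" and "CARD('d2::finite) \<ge> 2"
    and "r \<ge> 2"
    and "real r \<ge> 2 * real_of_int \<lceil>(2 * real CARD('d1) - real (min CARD('d1) CARD('d2)))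
                                   / (2 * real (min CARD('d1) CARD('d0)) - 2)\<rceil>"
  shows "hpnn2_identifiable TYPE('d0) TYPE('d1) TYPE('d2) r"
proof -
  define R where "R = CARD('d1)"
  define m where "m = min CARD('d1) CARD('d2)"
  define p where "p = r div 2"
  define q where "q = r - p"
  define KB where "KB = min CARD('d1) ((CARD('d0) - 1) * p + 1)"
  define i0 :: 'd0 where "i0 = undefined"
  have p1: "1 \<le> p" "p \<le> q" "p + q = r" using assms(4) by (auto simp: p_def q_def)
  have KBp: "KB \<le> (CARD('d0) - 1) * p + 1" by (simp add: KB_def)
  have KBq: "KB \<le> (CARD('d0) - 1) * q + 1"
  proof -
    have "(CARD('d0) - 1) * p \<le> (CARD('d0) - 1) * q" using p1 by simp
    then show ?thesis using KBp by linarith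
  qed
  have KBR: "KB \<le> R" by (simp add: KB_def R_def)
  have mR: "m \<le> R" by (simp add: m_def R_def)
  have KB1: "1 \<le> KB" using assms(2) by (simp add: KB_def)
  have Kineq: "2 * R + 2 \<le> m + KB + KB"
    using ceil_arith[OF assms(1-3) assms(5)] by (simp add: R_def m_def KB_def p_def)
  define badA where "badA = (\<lambda>S::'d1 set. {P :: (real^'d0^'d1) \<times> (real^'d1^'d2).
           \<not> (\<forall>c. (\<forall>k\<in>UNIV. (\<Sum>j\<in>S. c j * snd P $ k $ j) = 0) \<longrightarrow> (\<forall>j\<in>S. c j = 0))})"
  define badB where "badB = (\<lambda>(e::nat) (S::'d1 set). {P :: (real^'d0^'d1) \<times> (real^'d1^'d2).
           \<not> (\<forall>c. (\<forall>y\<in>ysamp i0 e. (\<Sum>j\<in>S. c j * (fst P $ j \<bullet> y)^e) = 0) \<longrightarrow> (\<forall>j\<in>S. c j = 0))})"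
  define N where "N = (\<Union>S\<in>{S. card S \<le> m}. badA S) \<union> (\<Union>S\<in>{S. card S \<le> KB}. badB p S) \<union> (\<Union>S\<in>{S. card S \<le> KB}. badB q S)"
  have Nnull: "N \<in> null_sets lebesgue"
  proof -
    have "(\<Union>S\<in>{S. card S \<le> m}. badA S) \<in> null_sets lebesgue"
    proof (rule null_sets_UN')
      show "countable {S::'d1 set. card S \<le> m}" by (rule countable_finite) simp
      fix S :: "'d1 set" assume "S \<in> {S. card S \<le> m}"
      then have "card S \<le> CARD('d2)" by (simp add: m_def)
      then show "badA S \<in> null_sets lebesgue" unfolding badA_def by (rule nullA)
    qed
    moreover have "(\<Union>S\<in>{S. card S \<le> KB}. badB e S) \<in> null_sets lebesgue"
      if "KB \<le> (CARD('d0) - 1) * e + 1" for e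
    proof (rule null_sets_UN')
      show "countable {S::'d1 set. card S \<le> KB}" by (rule countable_finite) simp
      fix S :: "'d1 set" assume "S \<in> {S. card S \<le> KB}"
      then have "card S \<le> (CARD('d0) - 1) * e + 1" using that by simp
      then show "badB e S \<in> null_sets lebesgue" unfolding badB_def by (rule nullB)
    qed
    ultimately show ?thesis unfolding N_def using KBp KBq by (intro null_sets.Un) auto
  qed
  show ?thesis unfolding hpnn2_identifiable_def
  proof (intro exI[of _ N] conjI allI impI)
    show "N \<in> null_sets lebesgue" by (rule Nnull)
    fix W1 :: "real^'d0^'d1" and W2 :: "real^'d1^'d2" assume WN: "(W1, W2) \<notin> N"
    show "hpnn2_unique r W1 W2" unfolding hpnn2_unique_def
    proof (intro allI impI)
      fix W1' :: "real^'d0^'d1" and W2' :: "real^'d1^'d2" assume same: "hpnn2 W1' W2' r = hpnn2 W1 W2 r"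
      show "hpnn2_equiv r W1' W2' W1 W2"
      proof (rule core_unique[OF same p1, where m = m and KB = KB])
        fix S :: "'d1 set" and c assume S: "card S \<le> m" and z: "\<forall>k. (\<Sum>j\<in>S. c j * W2 $ k $ j) = 0"
        have "(W1, W2) \<notin> badA S" using WN S by (auto simp: N_def)
        then show "\<forall>j\<in>S. c j = 0" using z by (auto simp: badA_def)
      next
        fix S :: "'d1 set" and c assume S: "card S \<le> KB" and z: "\<forall>y. (\<Sum>j\<in>S. c j * (W1 $ j \<bullet> y)^p) = 0"
        have "(W1, W2) \<notin> badB p S" using WN S by (auto simp: N_def)
        then show "\<forall>j\<in>S. c j = 0" using z by (auto simp: badB_def)
      next
        fix S :: "'d1 set" and c assume S: "card S \<le> KB" and z: "\<forall>y. (\<Sum>j\<in>S. c j * (W1 $ j \<bullet> y)^q) = 0"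
        have "(W1, W2) \<notin> badB q S" using WN S by (auto simp: N_def)
        then show "\<forall>j\<in>S. c j = 0" using z by (auto simp: badB_def)
      next
        show "2 * CARD('d1) + 2 \<le> m + KB + KB" using Kineq by (simp add: R_def)
        show "m \<le> CARD('d1)" using mR by (simp add: R_def)
        show "KB \<le> CARD('d1)" using KBR by (simp add: R_def)
        show "1 \<le> KB" by (rule KB1)
      qed
    qed
  qed
qed

end
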